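(* Let $V$ be a vertex operator algebra, fix $n\in\mathbb{Z}_+$, and let $u\in V$ have weight $\mathrm{wt}\,u\ge-n$ such that $V^u=\langle u\rangle^1$ satisfies the permutation property. Then for $i_1,\dots,i_{2n}\in\mathbb{N}$, \[ \binom{i_1\mathrm{wt}\,u+n}{n}\sum_{m=0}^n(-1)^m\binom{i_1\mathrm{wt}\,u}{m}\,u_{-2n}^{i_{2n}}u_{-2n+1}^{i_{2n-1}}\cdots u_{-2}^{i_2}u_{-1}^{i_1}\mathbf{1}\ \equiv_n\ u_{-1}^{i_1}\mathbf{1}*_nu_{-2n}^{i_{2n}}u_{-2n+1}^{i_{2n-1}}\cdots u_{-2}^{i_2}\mathbf{1}+w', \] where $w'$ is a linear combination of elements $u_{-2n}^{i'_{2n}}\cdots u_{-1}^{i'_1}\mathbf{1}$ ($i'_j\in\mathbb{N}$) with either $i'_1+\cdots+i'_{2n}<i_1+\cdots+i_{2n}$, or $i'_1+\cdots+i'_{2n}=i_1+\cdots+i_{2n}$ and $i'_1<i_1$. Furthermore, the coefficient on the left-hand side is zero if and only if $0<|i_1\mathrm{wt}\,u|\le n$, and if $i_1\mathrm{wt}\,u>n$ it equals $(-1)^n\binom{i_1\mathrm{wt}\,u+n}{n}\binom{i_1\mathrm{wt}\,u-1}{n}$.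
   Context: $V$ has vacuum $\mathbf{1}$, modes $Y(v,x)=\sum v_kx^{-k-1}$, Virasoro operators $L(m)$, weights $\mathrm{wt}$. For homogeneous $a$: $a\circ_nb=\mathrm{Res}_x(1+x)^{\mathrm{wt}\,a+n}Y(a,x)b\,x^{-2n-2}$, $a*_nb=\sum_{m=0}^n(-1)^m\binom{m+n}{n}\mathrm{Res}_x(1+x)^{\mathrm{wt}\,a+n}Y(a,x)b\,x^{-n-m-1}$. $O_n(V)=\{(L(-1)+L(0))v:v\in V\}+\mathrm{span}\{a\circ_nb\}$; $a\equiv_nb$ means $a-b\in O_n(V)$. $V^u=\langle u\rangle^1$ is the span of all $u_{-k_1}\cdots u_{-k_r}\mathbf{1}$ ($k_i\in\mathbb{Z}_+$), assumed a vertex subalgebra; $F_r(w)$ is the span of $u_{-k_1}\cdots u_{-k_p}w$ with $p\le r$, $k_i\ge1$. $V^u$ satisfies the permutation property if for all $m\in\mathbb{Z}_+$, permutations $\sigma$ of $\{1,\dots,m\}$, $u^{(i)},w\in V^u$ and $k_i\in\mathbb{Z}$: $u^{(1)}_{-k_1}\cdots u^{(m)}_{-k_m}w-u^{(\sigma(1))}_{-k_{\sigma(1)}}\cdots u^{(\sigma(m))}_{-k_{\sigma(m)}}w\in F_{m-1}(w)$. Binomials $\binom{p}{q}=p(p-1)\cdots(p-q+1)/q!$ for $p\in\mathbb{Z}$, $q\in\mathbb{N}$. *)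

theory Defs
  imports Complex_Main "HOL-Combinatorics.Permutations"
begin

text \<open>The modes are given by
  Y a k b = a_k b, so that Y(a,x)b = sum_k a_k b x^(-k-1).\<close>

definition Lop :: "('v \<Rightarrow> int \<Rightarrow> 'v \<Rightarrow> 'v) \<Rightarrow> 'v \<Rightarrow> int \<Rightarrow> 'v \<Rightarrow> 'v" where
  "Lop Y \<omega> m = Y \<omega> (m + 1)"

definition weight_space ::
  "(complex \<Rightarrow> 'v \<Rightarrow> 'v) \<Rightarrow> ('v \<Rightarrow> int \<Rightarrow> 'v \<Rightarrow> 'v) \<Rightarrow> 'v \<Rightarrow> int \<Rightarrow> 'v set" where
  "weight_space sc Y \<omega> n = {v. Lop Y \<omega> 0 v = sc (of_int n) v}"

definition is_VOA ::
  "(complex \<Rightarrow> 'v::ab_group_add \<Rightarrow> 'v) \<Rightarrow> ('v \<Rightarrow> int \<Rightarrow> 'v \<Rightarrow> 'v) \<Rightarrow> 'v \<Rightarrow> 'v \<Rightarrow> complex \<Rightarrow> bool" where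
  "is_VOA sc Y vac \<omega> c \<longleftrightarrow>
     vector_space sc \<and>
     \<comment> \<open>bilinearity of the modes\<close>
     (\<forall>a k. Vector_Spaces.linear sc sc (Y a k)) \<and>
     (\<forall>b k. Vector_Spaces.linear sc sc (\<lambda>a. Y a k b)) \<and>
     \<comment> \<open>truncation\<close>
     (\<forall>a b. \<exists>N. \<forall>k\<ge>N. Y a k b = 0) \<and>
     \<comment> \<open>vacuum axioms\<close>
     (\<forall>k b. Y vac k b = (if k = -1 then b else 0)) \<and>
     (\<forall>a. Y a (-1) vac = a) \<and>
     (\<forall>a k. k \<ge> 0 \<longrightarrow> Y a k vac = 0) \<and>
     \<comment> \<open>Jacobi identity, in component (Borcherds) form; all sums are finite\<close>
     (\<forall>a b c p q r N. (\<forall>i\<ge>N. Y a (r + int i) b = 0 \<and> Y b (q + int i) c = 0 \<and> Y a (p + int i) c = 0) \<longrightarrow>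
        (\<Sum>i<N. sc ((of_int p) gchoose i) (Y (Y a (r + int i) b) (p + q - int i) c)) =
        (\<Sum>i<N. sc ((-1) ^ i * ((of_int r) gchoose i))
            (Y a (p + r - int i) (Y b (q + int i) c) -
             sc ((-1) powi r) (Y b (q + r - int i) (Y a (p + int i) c))))) \<and>
     \<comment> \<open>Virasoro relations with central charge c\<close>
     (\<forall>m n v. Lop Y \<omega> m (Lop Y \<omega> n v) - Lop Y \<omega> n (Lop Y \<omega> m v) =
        sc (of_int (m - n)) (Lop Y \<omega> (m + n) v) +
        sc (if m + n = 0 then (of_int (m ^ 3 - m) / 12) * c else 0) v) \<and>
     \<comment> \<open>L(-1)-derivative property\<close>
     (\<forall>a k b. Y (Lop Y \<omega> (-1) a) k b = sc (- of_int k) (Y a (k - 1) b)) \<and>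
     \<comment> \<open>L(0)-grading: V is the direct sum of the L(0)-eigenspaces V_n (n in Z),
         each finite-dimensional, and V_n = 0 for n sufficiently small\<close>
     module.span sc (\<Union>n. weight_space sc Y \<omega> n) = UNIV \<and>
     (\<forall>n. \<exists>B. finite B \<and> weight_space sc Y \<omega> n \<subseteq> module.span sc B) \<and>
     (\<exists>N. \<forall>n<N. weight_space sc Y \<omega> n = {0})"

text \<open>Residue Res_x (1+x)^W Y(a,x) b x^(-q) = sum_{j>=0} binom(W,j) a_{j-q} b
  (a finite sum by truncation; we sum over the support).\<close>
definition res_term ::
  "(complex \<Rightarrow> 'v::ab_group_add \<Rightarrow> 'v) \<Rightarrow> ('v \<Rightarrow> int \<Rightarrow> 'v \<Rightarrow> 'v) \<Rightarrow> int \<Rightarrow> int \<Rightarrow> 'v \<Rightarrow> 'v \<Rightarrow> 'v" where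
  "res_term sc Y W q a b =
     (let f = (\<lambda>j::nat. sc ((of_int W :: complex) gchoose j) (Y a (int j - q) b))
      in sum f {j. f j \<noteq> 0})"

definition circ_n ::
  "(complex \<Rightarrow> 'v::ab_group_add \<Rightarrow> 'v) \<Rightarrow> ('v \<Rightarrow> int \<Rightarrow> 'v \<Rightarrow> 'v) \<Rightarrow> nat \<Rightarrow> int \<Rightarrow> 'v \<Rightarrow> 'v \<Rightarrow> 'v" where
  "circ_n sc Y n w a b = res_term sc Y (w + int n) (2 * int n + 2) a b"

definition star_n ::
  "(complex \<Rightarrow> 'v::ab_group_add \<Rightarrow> 'v) \<Rightarrow> ('v \<Rightarrow> int \<Rightarrow> 'v \<Rightarrow> 'v) \<Rightarrow> nat \<Rightarrow> int \<Rightarrow> 'v \<Rightarrow> 'v \<Rightarrow> 'v" where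
  "star_n sc Y n w a b =
     (\<Sum>m\<le>n. sc ((-1) ^ m * of_nat ((m + n) choose n))
                (res_term sc Y (w + int n) (int n + int m + 1) a b))"

definition O_n ::
  "(complex \<Rightarrow> 'v::ab_group_add \<Rightarrow> 'v) \<Rightarrow> ('v \<Rightarrow> int \<Rightarrow> 'v \<Rightarrow> 'v) \<Rightarrow> 'v \<Rightarrow> nat \<Rightarrow> 'v set" where
  "O_n sc Y \<omega> n = module.span sc
     ({Lop Y \<omega> (-1) v + Lop Y \<omega> 0 v | v. True} \<union>
      {circ_n sc Y n w a b | w a b. a \<in> weight_space sc Y \<omega> w})"

definition ops :: "('v \<Rightarrow> int \<Rightarrow> 'v \<Rightarrow> 'v) \<Rightarrow> (nat \<Rightarrow> 'v) \<Rightarrow> (nat \<Rightarrow> int) \<Rightarrow> nat list \<Rightarrow> 'v \<Rightarrow> 'v" where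
  "ops Y us ks is w = foldr (\<lambda>i x. Y (us i) (- ks i) x) is w"

definition Vu :: "(complex \<Rightarrow> 'v::ab_group_add \<Rightarrow> 'v) \<Rightarrow> ('v \<Rightarrow> int \<Rightarrow> 'v \<Rightarrow> 'v) \<Rightarrow> 'v \<Rightarrow> 'v \<Rightarrow> 'v set" where
  "Vu sc Y vac u = module.span sc
     {ops Y (\<lambda>_. u) ks [1..<Suc r] vac | r ks. \<forall>i\<in>{1..r}. ks i \<ge> 1}"

definition F_filt :: "(complex \<Rightarrow> 'v::ab_group_add \<Rightarrow> 'v) \<Rightarrow> ('v \<Rightarrow> int \<Rightarrow> 'v \<Rightarrow> 'v) \<Rightarrow> 'v \<Rightarrow> nat \<Rightarrow> 'v \<Rightarrow> 'v set" where
  "F_filt sc Y u r w = module.span sc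
     {ops Y (\<lambda>_. u) ks [1..<Suc p] w | p ks. p \<le> r \<and> (\<forall>i\<in>{1..p}. ks i \<ge> 1)}"

definition vertex_subalgebra :: "('v \<Rightarrow> int \<Rightarrow> 'v \<Rightarrow> 'v) \<Rightarrow> 'v \<Rightarrow> 'v set \<Rightarrow> bool" where
  "vertex_subalgebra Y vac S \<longleftrightarrow> vac \<in> S \<and> (\<forall>a\<in>S. \<forall>b\<in>S. \<forall>k. Y a k b \<in> S)"

definition permutation_property ::
  "(complex \<Rightarrow> 'v::ab_group_add \<Rightarrow> 'v) \<Rightarrow> ('v \<Rightarrow> int \<Rightarrow> 'v \<Rightarrow> 'v) \<Rightarrow> 'v \<Rightarrow> 'v \<Rightarrow> bool" where
  "permutation_property sc Y vac u \<longleftrightarrow>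
     (\<forall>m::nat. \<forall>\<sigma> us ks w. m \<ge> 1 \<longrightarrow> \<sigma> permutes {1..m} \<longrightarrow>
        (\<forall>i\<in>{1..m}. us i \<in> Vu sc Y vac u) \<longrightarrow> w \<in> Vu sc Y vac u \<longrightarrow>
        ops Y us ks [1..<Suc m] w - ops Y us ks (map \<sigma> [1..<Suc m]) w
          \<in> F_filt sc Y u (m - 1) w)"

fun umon :: "('v \<Rightarrow> int \<Rightarrow> 'v \<Rightarrow> 'v) \<Rightarrow> 'v \<Rightarrow> 'v \<Rightarrow> (nat \<Rightarrow> nat) \<Rightarrow> nat \<Rightarrow> 'v" where
  "umon Y vac u is 0 = vac"
| "umon Y vac u is (Suc j) = (Y u (- int (Suc j)) ^^ is (Suc j)) (umon Y vac u is j)"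

end

theory Submission
  imports Defs
begin


locale vsetup =
  fixes sc :: "complex \<Rightarrow> 'v::ab_group_add \<Rightarrow> 'v"
    and Y :: "'v \<Rightarrow> int \<Rightarrow> 'v \<Rightarrow> 'v"
    and vac \<omega> u :: 'v and c :: complex and n :: nat and k :: int
  assumes VOA: "is_VOA sc Y vac \<omega> c"
    and n_pos: "n \<ge> 1"
    and wt_u: "u \<in> weight_space sc Y \<omega> k"
    and perm: "permutation_property sc Y vac u"
begin

lemma vs: "vector_space sc" using VOA unfolding is_VOA_def by blast

sublocale vector_space sc by (rule vs)

lemmas VV = VOA[unfolded is_VOA_def]
lemma linY: "Vector_Spaces.linear sc sc (Y a j)" using VV[THEN conjunct2, THEN conjunct1] by blast
lemma linY1: "Vector_Spaces.linear sc sc (\<lambda>a. Y a j b)"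
  using VV[THEN conjunct2, THEN conjunct2, THEN conjunct1] by blast

lemma Y_add: "Y a j (x + y) = Y a j x + Y a j y"
proof - interpret l: Vector_Spaces.linear sc sc "Y a j" by (rule linY) show ?thesis by (rule l.add) qed
lemma Y_scale: "Y a j (sc t x) = sc t (Y a j x)"
proof - interpret l: Vector_Spaces.linear sc sc "Y a j" by (rule linY) show ?thesis by (rule l.scale) qed
lemma Y_zero[simp]: "Y a j 0 = 0"
proof - interpret l: Vector_Spaces.linear sc sc "Y a j" by (rule linY) show ?thesis by (rule l.zero) qed
lemma Y_diff: "Y a j (x - y) = Y a j x - Y a j y"
proof - interpret l: Vector_Spaces.linear sc sc "Y a j" by (rule linY) show ?thesis by (rule l.diff) qed
lemma Y_sum: "Y a j (sum f A) = (\<Sum>x\<in>A. Y a j (f x))"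
proof - interpret l: Vector_Spaces.linear sc sc "Y a j" by (rule linY) show ?thesis by (rule l.sum) qed
lemma Y_neg: "Y a j (- x) = - Y a j x"
proof - interpret l: Vector_Spaces.linear sc sc "Y a j" by (rule linY) show ?thesis by (rule l.neg) qed
lemma Y1_add: "Y (x + y) j b = Y x j b + Y y j b"
proof - interpret l: Vector_Spaces.linear sc sc "\<lambda>a. Y a j b" by (rule linY1) show ?thesis by (rule l.add) qed
lemma Y1_scale: "Y (sc t x) j b = sc t (Y x j b)"
proof - interpret l: Vector_Spaces.linear sc sc "\<lambda>a. Y a j b" by (rule linY1) show ?thesis by (rule l.scale) qed
lemma Y1_zero[simp]: "Y 0 j b = 0"
proof - interpret l: Vector_Spaces.linear sc sc "\<lambda>a. Y a j b" by (rule linY1) show ?thesis by (rule l.zero) qed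
lemma Y1_diff: "Y (x - y) j b = Y x j b - Y y j b"
proof - interpret l: Vector_Spaces.linear sc sc "\<lambda>a. Y a j b" by (rule linY1) show ?thesis by (rule l.diff) qed
lemma Y1_sum: "Y (sum f A) j b = (\<Sum>x\<in>A. Y (f x) j b)"
proof - interpret l: Vector_Spaces.linear sc sc "\<lambda>a. Y a j b" by (rule linY1) show ?thesis by (rule l.sum) qed

lemma trunc: "\<exists>N. \<forall>j\<ge>N. Y a j b = 0" using VV[THEN conjunct2, THEN conjunct2, THEN conjunct2, THEN conjunct1] by blast

lemma trunc_nat: "\<exists>N::nat. \<forall>i\<ge>N. Y a (r + int i) b = 0"
proof -
  obtain N where N: "\<forall>j\<ge>N. Y a j b = 0" using trunc by blast
  show ?thesis by (rule exI[of _ "nat (N - r)"]) (use N in auto)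
qed

lemma vac_Y: "Y vac j b = (if j = -1 then b else 0)" using VV[THEN conjunct2, THEN conjunct2, THEN conjunct2, THEN conjunct2, THEN conjunct1] by blast
lemma Y_vac_m1[simp]: "Y a (-1) vac = a" using VV[THEN conjunct2, THEN conjunct2, THEN conjunct2, THEN conjunct2, THEN conjunct2, THEN conjunct1] by blast
lemma Y_vac_pos: "j \<ge> 0 \<Longrightarrow> Y a j vac = 0" using VV[THEN conjunct2, THEN conjunct2, THEN conjunct2, THEN conjunct2, THEN conjunct2, THEN conjunct2, THEN conjunct1] by blast

lemma borcherds:
  assumes "\<forall>i\<ge>N. Y a (r + int i) b = 0 \<and> Y b (q + int i) cc = 0 \<and> Y a (p + int i) cc = 0"
  shows "(\<Sum>i<N. sc ((of_int p) gchoose i) (Y (Y a (r + int i) b) (p + q - int i) cc)) =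
        (\<Sum>i<N. sc ((-1) ^ i * ((of_int r) gchoose i))
            (Y a (p + r - int i) (Y b (q + int i) cc) -
             sc ((-1) powi r) (Y b (q + r - int i) (Y a (p + int i) cc))))"
  using VV[THEN conjunct2, THEN conjunct2, THEN conjunct2, THEN conjunct2, THEN conjunct2, THEN conjunct2, THEN conjunct2, THEN conjunct1] assms by blast

lemma borcherds_N:
  "\<exists>N0. \<forall>N\<ge>N0. \<forall>i\<ge>N. Y a (r + int i) b = 0 \<and> Y b (q + int i) cc = 0 \<and> Y a (p + int i) cc = 0"
proof -
  obtain N1 where 1: "\<forall>i\<ge>N1. Y a (r + int i) b = 0" using trunc_nat by blast
  obtain N2 where 2: "\<forall>i\<ge>N2. Y b (q + int i) cc = 0" using trunc_nat by blast
  obtain N3 where 3: "\<forall>i\<ge>N3. Y a (p + int i) cc = 0" using trunc_nat by blast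
  show ?thesis by (rule exI[of _ "N1+N2+N3"]) (use 1 2 3 in auto)
qed

lemma virasoro: "Lop Y \<omega> m (Lop Y \<omega> m' v) - Lop Y \<omega> m' (Lop Y \<omega> m v) =
        sc (of_int (m - m')) (Lop Y \<omega> (m + m') v) +
        sc (if m + m' = 0 then (of_int (m ^ 3 - m) / 12) * c else 0) v"
  using VV[THEN conjunct2, THEN conjunct2, THEN conjunct2, THEN conjunct2, THEN conjunct2, THEN conjunct2, THEN conjunct2, THEN conjunct2, THEN conjunct1] by blast

lemma deriv: "Y (Lop Y \<omega> (-1) a) j b = sc (- of_int j) (Y a (j - 1) b)"
  using VV[THEN conjunct2, THEN conjunct2, THEN conjunct2, THEN conjunct2, THEN conjunct2, THEN conjunct2, THEN conjunct2, THEN conjunct2, THEN conjunct2, THEN conjunct1] by blast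

lemma sum_cut:
  assumes "(M::nat) \<le> N" "\<And>i. M \<le> i \<Longrightarrow> i < N \<Longrightarrow> f i = 0"
  shows "(\<Sum>i<N. f i) = (\<Sum>i<M. f i)"
proof (rule sum.mono_neutral_right)
  show "\<forall>i\<in>{..<N} - {..<M}. f i = 0" using assms(2) by (simp add: not_less)
qed (use assms(1) in auto)

lemma commutator:
  "Y a (int p) (Y b q x) - Y b q (Y a (int p) x) =
   (\<Sum>i<Suc p. sc (of_nat (p choose i)) (Y (Y a (int i) b) (int p + q - int i) x))"
proof -
  obtain N0 where N0: "\<forall>N\<ge>N0. \<forall>i\<ge>N. Y a (0 + int i) b = 0 \<and> Y b (q + int i) x = 0 \<and> Y a (int p + int i) x = 0"
    using borcherds_N by blast
  define N where "N = N0 + Suc p"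
  have B: "(\<Sum>i<N. sc ((of_int (int p)) gchoose i) (Y (Y a (0 + int i) b) (int p + q - int i) x)) =
        (\<Sum>i<N. sc ((-1) ^ i * ((of_int 0) gchoose i))
            (Y a (int p + 0 - int i) (Y b (q + int i) x) -
             sc ((-1) powi 0) (Y b (q + 0 - int i) (Y a (int p + int i) x))))"
    by (rule borcherds) (use N0 N_def in auto)
  have R: "(\<Sum>i<N. sc ((-1) ^ i * ((of_int 0) gchoose i))
            (Y a (int p + 0 - int i) (Y b (q + int i) x) -
             sc ((-1) powi 0) (Y b (q + 0 - int i) (Y a (int p + int i) x))))
        = Y a (int p) (Y b q x) - Y b q (Y a (int p) x)"
  proof -
    have "(\<Sum>i<N. sc ((-1) ^ i * ((of_int 0) gchoose i))
            (Y a (int p + 0 - int i) (Y b (q + int i) x) -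
             sc ((-1) powi 0) (Y b (q + 0 - int i) (Y a (int p + int i) x))))
       = (\<Sum>i<1. sc ((-1) ^ i * ((of_int 0) gchoose i))
            (Y a (int p + 0 - int i) (Y b (q + int i) x) -
             sc ((-1) powi 0) (Y b (q + 0 - int i) (Y a (int p + int i) x))))"
      by (rule sum_cut) (auto simp: N_def gbinomial_0_left)
    then show ?thesis by simp
  qed
  have L: "(\<Sum>i<N. sc ((of_int (int p)) gchoose i) (Y (Y a (0 + int i) b) (int p + q - int i) x))
     = (\<Sum>i<Suc p. sc (of_nat (p choose i)) (Y (Y a (int i) b) (int p + q - int i) x))"
  proof -
    have "(\<Sum>i<N. sc ((of_int (int p)) gchoose i) (Y (Y a (0 + int i) b) (int p + q - int i) x))
      = (\<Sum>i<Suc p. sc ((of_int (int p)) gchoose i) (Y (Y a (0 + int i) b) (int p + q - int i) x))"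
      by (rule sum_cut) (auto simp: N_def binomial_gbinomial[symmetric] binomial_eq_0)
    then show ?thesis by (simp add: binomial_gbinomial)
  qed
  show ?thesis using B R L by simp
qed

lemma L1u: "Y \<omega> 0 (Y u j x) = Y u j (Y \<omega> 0 x) - sc (of_int j) (Y u (j - 1) x)"
proof -
  have "Y \<omega> (int 0) (Y u j x) - Y u j (Y \<omega> (int 0) x) =
   (\<Sum>i<Suc 0. sc (of_nat (0 choose i)) (Y (Y \<omega> (int i) u) (int 0 + j - int i) x))"
    by (rule commutator)
  also have "\<dots> = Y (Lop Y \<omega> (-1) u) j x" by (simp add: Lop_def)
  also have "\<dots> = - sc (of_int j) (Y u (j - 1) x)" by (simp add: deriv)
  finally show ?thesis by (simp add: algebra_simps)
qed

lemma wt_u': "Y \<omega> 1 u = sc (of_int k) u"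
  using wt_u by (simp add: weight_space_def Lop_def)

lemma L0u: "Y \<omega> 1 (Y u j x) = Y u j (Y \<omega> 1 x) + sc (of_int (k - j - 1)) (Y u j x)"
proof -
  have "Y \<omega> (int 1) (Y u j x) - Y u j (Y \<omega> (int 1) x) =
   (\<Sum>i<Suc 1. sc (of_nat (1 choose i)) (Y (Y \<omega> (int i) u) (int 1 + j - int i) x))"
    by (rule commutator)
  also have "\<dots> = Y (Lop Y \<omega> (-1) u) (1 + j) x + Y (Y \<omega> 1 u) j x" by (simp add: Lop_def)
  also have "\<dots> = sc (- of_int (1 + j)) (Y u j x) + sc (of_int k) (Y u j x)"
    by (simp only: deriv wt_u' Y1_scale add_diff_cancel_left')
  also have "\<dots> = sc (- of_int (1 + j) + of_int k) (Y u j x)"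
    by (simp only: scale_left_distrib)
  also have "(- of_int (1 + j) + of_int k :: complex) = of_int (k - j - 1)" by simp
  finally show ?thesis by (simp add: algebra_simps)
qed

lemma L0vac: "Y \<omega> 1 vac = 0" by (simp add: Y_vac_pos)
lemma L1vac: "Y \<omega> 0 vac = 0" by (simp add: Y_vac_pos)

definition monoOn :: "nat list \<Rightarrow> 'v \<Rightarrow> 'v" where
  "monoOn xs x = foldr (\<lambda>j y. Y u (- int j) y) xs x"
definition mono :: "nat list \<Rightarrow> 'v" where
  "mono xs = monoOn xs vac"

lemma monoOn_Nil[simp]: "monoOn [] x = x" by (simp add: monoOn_def)
lemma monoOn_Cons[simp]: "monoOn (j # xs) x = Y u (- int j) (monoOn xs x)" by (simp add: monoOn_def)
lemma monoOn_append: "monoOn (xs @ ys) x = monoOn xs (monoOn ys x)" by (simp add: monoOn_def)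
lemma mono_Nil[simp]: "mono [] = vac" by (simp add: mono_def)
lemma mono_Cons[simp]: "mono (j # xs) = Y u (- int j) (mono xs)" by (simp add: mono_def)
lemma mono_append: "mono (xs @ ys) = monoOn xs (mono ys)" by (simp add: mono_def monoOn_append)

definition wtl :: "nat list \<Rightarrow> complex" where
  "wtl xs = (\<Sum>x\<leftarrow>xs. of_int (k + int x - 1))"

lemma L0_mono: "Y \<omega> 1 (mono xs) = sc (wtl xs) (mono xs)"
proof (induction xs)
  case Nil then show ?case by (simp add: L0vac wtl_def)
next
  case (Cons x xs)
  show ?case
    by (simp add: L0u Cons Y_scale wtl_def scale_left_distrib algebra_simps)
qed

lemma L1_mono: "Y \<omega> 0 (mono xs) = (\<Sum>t<length xs. sc (of_nat (xs!t)) (mono (xs[t := Suc (xs!t)])))"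
proof (induction xs)
  case Nil then show ?case by (simp add: L1vac)
next
  case (Cons x xs)
  have e1: "Y \<omega> 0 (mono (x # xs)) = Y u (- int x) (Y \<omega> 0 (mono xs)) - sc (of_int (- int x)) (Y u (- int x - 1) (mono xs))"
    by (simp only: L1u mono_Cons)
  have e2: "- int x - 1 = - int (Suc x)" by simp
  have e3: "sc (of_int (- int x)) (Y u (- int (Suc x)) (mono xs)) = - sc (of_nat x) (mono (Suc x # xs))"
    by simp
  have "Y \<omega> 0 (mono (x # xs)) = Y u (- int x) (Y \<omega> 0 (mono xs)) + sc (of_nat x) (mono (Suc x # xs))"
    unfolding e1 e2 e3 by simp
  also have "\<dots> = (\<Sum>t<length (x#xs). sc (of_nat ((x#xs)!t)) (mono ((x#xs)[t := Suc ((x#xs)!t)])))"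
    by (simp only: Cons sum.lessThan_Suc_shift length_Cons) (simp add: Y_sum Y_scale)
  finally show ?case .
qed

definition monoI :: "int list \<Rightarrow> 'v" where
  "monoI zs = foldr (\<lambda>z y. Y u z y) zs vac"

definition Fs :: "nat \<Rightarrow> 'v set" where
  "Fs r = span {mono xs | xs. length xs \<le> r \<and> (\<forall>x\<in>set xs. 1 \<le> x)}"

lemma monoI_mono: "monoI (map (\<lambda>x. - int x) xs) = mono xs"
  by (induct xs) (simp_all add: monoI_def)

lemma ops_eq: "ops Y (\<lambda>_. u) ks L w = foldr (\<lambda>z y. Y u z y) (map (\<lambda>i. - ks i) L) w"
  by (induct L) (simp_all add: ops_def)

lemma ops_mono: "\<forall>i\<in>set L. ks i \<ge> 1 \<Longrightarrow>
   foldr (\<lambda>z y. Y u z y) (map (\<lambda>i. - ks i) L) vac = mono (map (\<lambda>i. nat (ks i)) L)"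
  by (induct L) auto

lemma F_filt_sub: "F_filt sc Y u r vac \<subseteq> Fs r"
  unfolding F_filt_def Fs_def
proof (rule span_mono, clarify)
  fix p and ks :: "nat \<Rightarrow> int" assume p: "p \<le> r" "\<forall>i\<in>{1..p}. 1 \<le> ks i"
  show "\<exists>xs. ops Y (\<lambda>_. u) ks [1..<Suc p] vac = mono xs \<and> length xs \<le> r \<and> (\<forall>x\<in>set xs. 1 \<le> x)"
  proof (rule exI[of _ "map (\<lambda>i. nat (ks i)) [1..<Suc p]"], intro conjI)
    have "\<forall>i\<in>set [1..<Suc p]. ks i \<ge> 1" using p by auto
    then show "ops Y (\<lambda>_. u) ks [1..<Suc p] vac = mono (map (\<lambda>i. nat (ks i)) [1..<Suc p])"
      by (simp only: ops_eq ops_mono)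
    show "length (map (\<lambda>i. nat (ks i)) [1..<Suc p]) \<le> r" using p by simp
    show "\<forall>x\<in>set (map (\<lambda>i. nat (ks i)) [1..<Suc p]). 1 \<le> x"
    proof
      fix x assume "x \<in> set (map (\<lambda>i. nat (ks i)) [1..<Suc p])"
      then obtain i where i0: "i \<in> set [1..<Suc p]" "x = nat (ks i)" by auto
      then have i: "i \<in> {1..p}" "x = nat (ks i)" by (simp_all del: upt_Suc)
      then have "ks i \<ge> 1" using p by blast
      then show "1 \<le> x" using i by simp
    qed
  qed
qed

lemma u_Vu: "u \<in> Vu sc Y vac u"
  unfolding Vu_def
  by (rule span_base, rule CollectI, rule exI[of _ 1], rule exI[of _ "\<lambda>_. 1"]) (simp add: ops_def)

lemma vac_Vu: "vac \<in> Vu sc Y vac u"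
  unfolding Vu_def
  by (rule span_base, rule CollectI, rule exI[of _ 0], rule exI[of _ "\<lambda>_. 1"]) (simp add: ops_def)

lemma perm_monoI:
  assumes "zs \<noteq> []" "mset zs' = mset zs"
  shows "monoI zs - monoI zs' \<in> Fs (length zs - 1)"
proof -
  define m where "m = length zs"
  obtain p where p: "p permutes {..<length zs}" "permute_list p zs = zs'"
    using mset_eq_permutation[OF assms(2)] by blast
  define ks where "ks = (\<lambda>i. - zs!(i-1))"
  define \<sigma> where "\<sigma> = (\<lambda>i. if i \<in> {1..m} then Suc (p (i-1)) else i)"
  have b1: "bij_betw (\<lambda>i. i - 1) {1..m} {..<m}"
    by (rule bij_betw_byWitness[where f'=Suc]) auto
  have b2: "bij_betw p {..<m} {..<m}" using p(1) m_def by (simp add: permutes_imp_bij)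
  have b3: "bij_betw Suc {..<m} {1..m}"
    by (simp add: lessThan_atLeast0 image_Suc_atLeastLessThan atLeastLessThanSuc_atLeastAtMost)
  have "bij_betw (Suc \<circ> (p \<circ> (\<lambda>i. i - 1))) {1..m} {1..m}"
    by (rule bij_betw_trans[OF bij_betw_trans[OF b1 b2] b3])
  then have "bij_betw \<sigma> {1..m} {1..m}"
    by (rule bij_betw_cong[THEN iffD1, rotated]) (simp add: \<sigma>_def)
  then have sp: "\<sigma> permutes {1..m}"
    by (rule bij_imp_permutes) (auto simp: \<sigma>_def)
  have m1: "m \<ge> 1" using assms(1) m_def by (cases zs) auto
  have P: "ops Y (\<lambda>_. u) ks [1..<Suc m] vac - ops Y (\<lambda>_. u) ks (map \<sigma> [1..<Suc m]) vac
          \<in> F_filt sc Y u (m - 1) vac"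
    using perm[unfolded permutation_property_def, rule_format, of m \<sigma> "\<lambda>_. u" vac ks] m1 sp u_Vu vac_Vu
    by blast
  have e1: "map (\<lambda>i. - ks i) [1..<Suc m] = zs"
  proof -
    have "[1..<Suc m] = map Suc [0..<m]" by (simp add: map_Suc_upt del: upt_Suc)
    then have "map (\<lambda>i. - ks i) [1..<Suc m] = map (\<lambda>j. zs ! j) [0..<m]"
      by (simp add: ks_def del: upt_Suc)
    then show ?thesis by (simp add: m_def map_nth del: upt_Suc)
  qed
  have e2: "map (\<lambda>i. - ks i) (map \<sigma> [1..<Suc m]) = zs'"
  proof -
    have "[1..<Suc m] = map Suc [0..<m]" by (simp add: map_Suc_upt del: upt_Suc)
    then have "map (\<lambda>i. - ks i) (map \<sigma> [1..<Suc m]) = map (\<lambda>j. zs ! p j) [0..<m]"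
      by (simp add: ks_def \<sigma>_def del: upt_Suc)
    then show ?thesis using p(2) by (simp add: permute_list_def m_def)
  qed
  have P': "monoI zs - monoI zs' \<in> F_filt sc Y u (m - 1) vac"
    using P unfolding ops_eq e1 e2 monoI_def .
  show ?thesis using P' F_filt_sub[of "m - 1"] unfolding m_def by blast
qed

end



definition canon :: "(nat \<Rightarrow> nat) \<Rightarrow> nat \<Rightarrow> nat list" where
  "canon c m = concat (map (\<lambda>j. replicate (c j) j) (rev [1..<Suc m]))"

lemma canon_0[simp]: "canon c 0 = []" by (simp add: canon_def)
lemma canon_Suc: "canon c (Suc m) = replicate (c (Suc m)) (Suc m) @ canon c m"
  by (simp add: canon_def)

lemma count_canon: "count (mset (canon c m)) x = (if x \<in> {1..m} then c x else 0)"
  by (induction m) (auto simp: canon_Suc)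

lemma mset_canon: "set L \<subseteq> {1..m} \<Longrightarrow> mset (canon (count_list L) m) = mset L"
proof (rule multiset_eqI)
  fix x assume "set L \<subseteq> {1..m}"
  then show "count (mset (canon (count_list L) m)) x = count (mset L) x"
    unfolding count_canon by (auto simp: count_mset count_list_0_iff)
qed

lemma length_canon: "length (canon c m) = sum c {1..m}"
  by (induction m) (auto simp: canon_Suc)

lemma set_canon: "set (canon c m) \<subseteq> {j. j \<in> {1..m} \<and> c j > 0}"
  by (induction m) (auto simp: canon_Suc)

lemma canon_split: "m \<ge> 1 \<Longrightarrow> canon c m = canon (c(1:=0)) m @ replicate (c 1) 1"
proof (induction m)
  case 0 then show ?case by simp
next
  case (Suc m)
  show ?case
  proof (cases "m = 0")
    case True then show ?thesis by (simp add: canon_Suc)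
  next
    case False then show ?thesis using Suc by (simp add: canon_Suc)
  qed
qed

context vsetup
begin

lemma Fs_mono: "r \<le> r' \<Longrightarrow> Fs r \<subseteq> Fs r'"
  unfolding Fs_def by (rule span_mono) auto

lemma mono_Fs: "length xs \<le> r \<Longrightarrow> \<forall>x\<in>set xs. 1 \<le> x \<Longrightarrow> mono xs \<in> Fs r"
  unfolding Fs_def by (rule span_base) auto

lemma subspace_Fs: "subspace (Fs r)" unfolding Fs_def by simp

lemma subspace_Ypre: "subspace T \<Longrightarrow> subspace {x. Y a j x \<in> T}"
  unfolding subspace_def by (auto simp: Y_add Y_scale)

lemma Y_span:
  assumes "x \<in> span S" "subspace T" "\<forall>y\<in>S. Y a j y \<in> T"
  shows "Y a j x \<in> T"
proof -
  have "x \<in> {x. Y a j x \<in> T}"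
    using assms(1) by (rule span_induct) (use assms subspace_Ypre in auto)
  then show ?thesis by simp
qed

lemma foldr_zero: "foldr (\<lambda>z y. Y u z y) L 0 = 0"
  by (induct L) auto

lemma perm_mono:
  assumes "xs \<noteq> []" "mset ys = mset xs"
  shows "mono xs - mono ys \<in> Fs (length xs - 1)"
proof -
  have "monoI (map (\<lambda>x. - int x) xs) - monoI (map (\<lambda>x. - int x) ys) \<in> Fs (length (map (\<lambda>x. - int x) xs) - 1)"
    by (rule perm_monoI) (use assms in auto)
  then show ?thesis by (simp add: monoI_mono)
qed

lemma pos_mode_mono:
  assumes "j \<ge> 0" "length xs \<le> r" "\<forall>x\<in>set xs. 1 \<le> x"
  shows "Y u j (mono xs) \<in> Fs r"
proof -
  have "monoI (j # map (\<lambda>x. - int x) xs) - monoI (map (\<lambda>x. - int x) xs @ [j]) \<in> Fs (length (j # map (\<lambda>x. - int x) xs) - 1)"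
    by (rule perm_monoI) auto
  moreover have "monoI (map (\<lambda>x. - int x) xs @ [j]) = 0"
    using assms(1) by (simp add: monoI_def Y_vac_pos foldr_zero)
  moreover have "monoI (j # map (\<lambda>x. - int x) xs) = Y u j (mono xs)"
    by (simp add: monoI_def monoI_mono[symmetric])
  ultimately have "Y u j (mono xs) \<in> Fs (length xs)" by simp
  then show ?thesis using Fs_mono[OF assms(2)] by blast
qed

lemma pos_mode_Fs: "j \<ge> 0 \<Longrightarrow> x \<in> Fs r \<Longrightarrow> Y u j x \<in> Fs r"
  unfolding Fs_def
proof (rule Y_span[where S="{mono xs | xs. length xs \<le> r \<and> (\<forall>x\<in>set xs. 1 \<le> x)}"])
  assume "j \<ge> 0"
  show "\<forall>y\<in>{mono xs |xs. length xs \<le> r \<and> (\<forall>x\<in>set xs. 1 \<le> x)}.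
       Y u j y \<in> span {mono xs |xs. length xs \<le> r \<and> (\<forall>x\<in>set xs. 1 \<le> x)}"
    using pos_mode_mono[OF \<open>j \<ge> 0\<close>] unfolding Fs_def by blast
qed auto

lemma neg_mode_Fs: "j \<ge> 1 \<Longrightarrow> x \<in> Fs r \<Longrightarrow> Y u (- int j) x \<in> Fs (Suc r)"
  unfolding Fs_def
proof (rule Y_span[where S="{mono xs | xs. length xs \<le> r \<and> (\<forall>x\<in>set xs. 1 \<le> x)}"])
  assume "j \<ge> 1"
  show "\<forall>y\<in>{mono xs |xs. length xs \<le> r \<and> (\<forall>x\<in>set xs. 1 \<le> x)}.
       Y u (- int j) y \<in> span {mono xs |xs. length xs \<le> Suc r \<and> (\<forall>x\<in>set xs. 1 \<le> x)}"
  proof clarify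
    fix xs :: "nat list" assume "length xs \<le> r" "\<forall>x\<in>set xs. 1 \<le> x"
    then show "Y u (- int j) (mono xs) \<in> span {mono xs |xs. length xs \<le> Suc r \<and> (\<forall>x\<in>set xs. 1 \<le> x)}"
      using \<open>j \<ge> 1\<close> by (intro span_base CollectI exI[of _ "j # xs"]) auto
  qed
qed auto

lemma neg_mode_Fs': "j < 0 \<Longrightarrow> x \<in> Fs r \<Longrightarrow> Y u j x \<in> Fs (Suc r)"
  using neg_mode_Fs[of "nat (- j)" x r] by simp

lemma umon_canon: "umon Y vac u cc m = mono (canon cc m)"
proof (induction m)
  case 0 then show ?case by simp
next
  case (Suc m)
  have "\<And>a. (Y u (- int (Suc m)) ^^ a) (mono L) = mono (replicate a (Suc m) @ L)" for L
    by (induct_tac a) auto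
  then show ?case using Suc by (simp add: canon_Suc)
qed

abbreviation On :: "'v set" where "On \<equiv> O_n sc Y \<omega> n"

lemma subspace_On: "subspace On" unfolding O_n_def by simp

lemma On_L: "Y \<omega> 0 v + Y \<omega> 1 v \<in> On"
  unfolding O_n_def by (rule span_base) (auto simp: Lop_def)

lemma On_circ: "a \<in> weight_space sc Y \<omega> w \<Longrightarrow> circ_n sc Y n w a b \<in> On"
  unfolding O_n_def by (rule span_base) blast

definition CanU :: "nat \<Rightarrow> 'v set" where
  "CanU r = {umon Y vac u i' (2 * n) | i'. (\<Sum>j\<in>{1..2*n}. i' j) \<le> r}"

definition Q :: "nat \<Rightarrow> 'v set" where
  "Q r = span (On \<union> CanU r)"

lemma Q_mono: "r \<le> r' \<Longrightarrow> Q r \<subseteq> Q r'"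
  unfolding Q_def CanU_def by (rule span_mono) auto

lemma subspace_Q: "subspace (Q r)" unfolding Q_def by simp

lemma On_Q: "On \<subseteq> Q r" unfolding Q_def using span_superset by blast

lemma canonical:
  assumes "set (L::nat list) \<subseteq> {1..2*n}"
  shows "mono L - umon Y vac u (count_list L) (2*n) \<in> Fs (length L - 1)"
proof (cases "L = []")
  case True
  have "canon (count_list []) m = []" for m by (induct m) (simp_all add: canon_Suc)
  then show ?thesis using True by (simp add: umon_canon span_zero Fs_def)
next
  case False
  have "mono L - mono (canon (count_list L) (2*n)) \<in> Fs (length L - 1)"
    by (rule perm_mono) (use False mset_canon[OF assms] in auto)
  then show ?thesis by (simp add: umon_canon)
qed

lemma sum_count_L: "set (L::nat list) \<subseteq> {1..m} \<Longrightarrow> (\<Sum>j\<in>{1..m}. count_list L j) = length L"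
  by (rule sum_count_set) auto

lemma umon_CanU: "set (L::nat list) \<subseteq> {1..2*n} \<Longrightarrow> length L \<le> r \<Longrightarrow> umon Y vac u (count_list L) (2*n) \<in> CanU r"
  unfolding CanU_def using sum_count_L[of L "2*n"] by auto

end



fun cf :: "nat \<Rightarrow> int \<Rightarrow> complex" where
  "cf 0 q = 1"
| "cf (Suc l) q = - of_int q * cf l (q - 1)"

lemma cf_nz: "q < 0 \<Longrightarrow> cf l q \<noteq> 0"
  by (induction l arbitrary: q) auto

lemma sum_list_upd_Suc: "k < length xs \<Longrightarrow> sum_list (xs[k := Suc (xs!k)]) = Suc (sum_list (xs::nat list))"
  by (induction xs arbitrary: k) (auto split: nat.splits)

lemma count_list_upd: "k < length xs \<Longrightarrow> xs!k \<noteq> a \<Longrightarrow> v \<noteq> a \<Longrightarrow> count_list (xs[k := v]) a = count_list xs a"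
  by (induction xs arbitrary: k) (auto split: nat.splits)

context vsetup
begin

definition Dl :: "nat \<Rightarrow> 'v" where "Dl l = (Y \<omega> 0 ^^ l) u"

lemma Dl_mode: "Y (Dl l) q x = sc (cf l q) (Y u (q - int l) x)"
proof (induction l arbitrary: q)
  case 0 then show ?case by (simp add: Dl_def)
next
  case (Suc l)
  have "Y (Dl (Suc l)) q x = Y (Lop Y \<omega> (-1) (Dl l)) q x" by (simp add: Dl_def Lop_def)
  also have "\<dots> = sc (- of_int q) (Y (Dl l) (q - 1) x)" by (rule deriv)
  also have "\<dots> = sc (cf (Suc l) q) (Y u (q - int (Suc l)) x)"
    by (simp add: Suc algebra_simps)
  finally show ?case .
qed

lemma L0L1: "Y \<omega> 1 (Y \<omega> 0 v) = Y \<omega> 0 (Y \<omega> 1 v) + Y \<omega> 0 v"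
proof -
  have "Lop Y \<omega> 0 (Lop Y \<omega> (-1) v) - Lop Y \<omega> (-1) (Lop Y \<omega> 0 v) =
        sc (of_int (0 - (-1))) (Lop Y \<omega> (0 + (-1)) v) +
        sc (if 0 + (-1::int) = 0 then (of_int (0 ^ 3 - 0) / 12) * c else 0) v"
    by (rule virasoro)
  then show ?thesis by (simp add: Lop_def algebra_simps)
qed

lemma Dl_wt: "Y \<omega> 1 (Dl l) = sc (of_int (k + int l)) (Dl l)"
proof (induction l)
  case 0 then show ?case by (simp add: Dl_def wt_u')
next
  case (Suc l)
  have "Y \<omega> 1 (Dl (Suc l)) = Y \<omega> 0 (Y \<omega> 1 (Dl l)) + Y \<omega> 0 (Dl l)"
    by (simp add: Dl_def L0L1)
  also have "\<dots> = sc (of_int (k + int l) + 1) (Y \<omega> 0 (Dl l))"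
    by (simp add: Suc Y_scale Y_add scale_left_distrib)
  finally show ?case by (simp add: Dl_def add.commute add.left_commute)
qed

lemma Dl_ws: "Dl l \<in> weight_space sc Y \<omega> (k + int l)"
  using Dl_wt by (simp add: weight_space_def Lop_def)

lemma res_term_sum:
  assumes "\<forall>j\<ge>J. Y a (int j - q) b = 0"
  shows "res_term sc Y W q a b = (\<Sum>j<J. sc (of_int W gchoose j) (Y a (int j - q) b))"
proof -
  define f where "f = (\<lambda>j::nat. sc ((of_int W :: complex) gchoose j) (Y a (int j - q) b))"
  have sub: "{j. f j \<noteq> 0} \<subseteq> {..<J}"
    using assms by (auto simp: f_def not_less[symmetric])
  have "sum f {j. f j \<noteq> 0} = sum f {..<J}"
    by (rule sum.mono_neutral_left) (use sub in auto)
  then show ?thesis unfolding res_term_def Let_def f_def .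
qed

lemma trunc_shift: "\<exists>J. \<forall>j\<ge>J. Y a (int j - q) b = 0"
proof -
  obtain N where "\<forall>i\<ge>N. Y a (- q + int i) b = 0" using trunc_nat by blast
  then show ?thesis by (intro exI[of _ N]) (simp add: algebra_simps)
qed

lemma Q_add: "x \<in> Q r \<Longrightarrow> y \<in> Q r \<Longrightarrow> x + y \<in> Q r" unfolding Q_def by (rule span_add)
lemma Q_diff: "x \<in> Q r \<Longrightarrow> y \<in> Q r \<Longrightarrow> x - y \<in> Q r" unfolding Q_def by (rule span_diff)
lemma Q_scale: "x \<in> Q r \<Longrightarrow> sc t x \<in> Q r" unfolding Q_def by (rule span_scale)
lemma Q_sum: "(\<And>i. i \<in> A \<Longrightarrow> f i \<in> Q r) \<Longrightarrow> sum f A \<in> Q r" unfolding Q_def by (rule span_sum)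
lemma Q_unscale: "sc t x \<in> Q r \<Longrightarrow> t \<noteq> 0 \<Longrightarrow> x \<in> Q r"
  using Q_scale[of "sc t x" r "1/t"] by simp

lemma vac_CanU: "vac \<in> CanU r"
proof -
  have "umon Y vac u (count_list []) (2*n) \<in> CanU r" by (rule umon_CanU) auto
  moreover have "canon (count_list []) m = []" for m by (induct m) (simp_all add: canon_Suc)
  ultimately show ?thesis by (simp add: umon_canon)
qed

lemma FQ:
  assumes IHr: "\<And>ys. length ys < r \<Longrightarrow> \<forall>y\<in>set ys. 1 \<le> y \<Longrightarrow> mono ys \<in> Q (length ys)"
  shows "Fs (r - 1) \<subseteq> Q r"
  unfolding Fs_def Q_def[of r]
proof (rule span_minimal[OF _ subspace_span], clarify)
  fix ys :: "nat list" assume ys: "length ys \<le> r - 1" "\<forall>x\<in>set ys. 1 \<le> x"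
  show "mono ys \<in> span (On \<union> CanU r)"
  proof (cases "ys = []")
    case True then show ?thesis using vac_CanU by (simp add: span_base)
  next
    case False
    then have "length ys < r" using ys by (cases ys) auto
    then have "mono ys \<in> Q (length ys)" using IHr ys by blast
    then show ?thesis using Q_mono[of "length ys" r] \<open>length ys < r\<close> unfolding Q_def by auto
  qed
qed

lemma sum_list_mset_eq: "mset xs = mset ys \<Longrightarrow> sum_list xs = sum_list (ys::nat list)"
  by (metis sum_mset_sum_list)

lemma caseA:
  assumes FQr: "Fs (r - 1) \<subseteq> Q r"
  and IHE: "\<forall>ys. length ys = r \<longrightarrow> (\<forall>y\<in>set ys. 1 \<le> y) \<longrightarrow> sum_list ys < E \<longrightarrow> mono ys \<in> Q r"
  and zs: "length zs = r" "\<forall>z\<in>set zs. 1 \<le> z" "sum_list zs = E" "K \<in> set zs" "K \<ge> 2*n+2"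
  shows "mono zs \<in> Q r"
proof -
  define rest where "rest = remove1 K zs"
  have ms: "mset (K # rest) = mset zs" using zs(4) by (simp add: rest_def)
  have zsne: "zs \<noteq> []" using zs(4) by auto
  have d1: "mono zs - mono (K # rest) \<in> Q r" using perm_mono[OF zsne ms] FQr zs(1) by auto
  have lr: "length rest + 1 = r" using zs(1,4) by (simp add: rest_def length_remove1)
    (metis One_nat_def Suc_pred length_pos_if_in_set)
  have rest1: "\<forall>y\<in>set rest. 1 \<le> y" using zs(2) set_remove1_subset[of K zs] by (auto simp: rest_def)
  have sr: "sum_list rest + K = E" using sum_list_mset_eq[OF ms] zs(3) by simp
  define l where "l = K - (2*n+2)"
  define b where "b = mono rest"
  have bF: "b \<in> Fs (r - 1)" unfolding b_def by (rule mono_Fs) (use lr rest1 in auto)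
  obtain J where J: "\<forall>j\<ge>J. Y (Dl l) (int j - (2 * int n + 2)) b = 0" using trunc_shift by blast
  define g where "g j = (of_int (k + int l + int n) gchoose j) * cf l (int j - (2*int n+2))" for j
  have circ: "circ_n sc Y n (k + int l) (Dl l) b =
      (\<Sum>j<Suc (J + K). sc (of_int (k + int l + int n) gchoose j) (Y (Dl l) (int j - (2 * int n + 2)) b))"
    unfolding circ_n_def by (rule res_term_sum) (use J in auto)
  also have "\<dots> = (\<Sum>j<Suc (J + K). sc (g j) (Y u (int j - int K) b))"
  proof (rule sum.cong[OF refl])
    fix j
    have "int j - (2 * int n + 2) - int l = int j - int K" using zs(5) by (simp add: l_def)
    then show "sc (of_int (k + int l + int n) gchoose j) (Y (Dl l) (int j - (2 * int n + 2)) b) =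
          sc (g j) (Y u (int j - int K) b)"
      by (simp only: Dl_mode g_def scale_scale)
  qed
  also have "\<dots> = sc (g 0) (Y u (- int K) b) + (\<Sum>j<J + K. sc (g (Suc j)) (Y u (int (Suc j) - int K) b))"
    by (simp only: sum.lessThan_Suc_shift) simp
  finally have circ2: "circ_n sc Y n (k + int l) (Dl l) b =
     sc (g 0) (Y u (- int K) b) + (\<Sum>j<J + K. sc (g (Suc j)) (Y u (int (Suc j) - int K) b))" .
  have cQ: "circ_n sc Y n (k + int l) (Dl l) b \<in> Q r"
    using On_circ[OF Dl_ws] On_Q by blast
  have sQ: "(\<Sum>j<J + K. sc (g (Suc j)) (Y u (int (Suc j) - int K) b)) \<in> Q r"
  proof (rule Q_sum, rule Q_scale)
    fix j
    show "Y u (int (Suc j) - int K) b \<in> Q r"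
    proof (cases "Suc j < K")
      case True
      have e: "int (Suc j) - int K = - int (K - Suc j)" using True by simp
      have "mono ((K - Suc j) # rest) \<in> Q r"
        by (rule IHE[rule_format]) (use True lr rest1 sr in auto)
      then show ?thesis unfolding e b_def by simp
    next
      case False
      have "Y u (int (Suc j) - int K) b \<in> Fs (r - 1)"
        by (rule pos_mode_Fs) (use False bF in auto)
      then show ?thesis using FQr by blast
    qed
  qed
  have "sc (g 0) (Y u (- int K) b) \<in> Q r"
  proof -
    have "sc (g 0) (Y u (- int K) b) = circ_n sc Y n (k + int l) (Dl l) b -
       (\<Sum>j<J + K. sc (g (Suc j)) (Y u (int (Suc j) - int K) b))" using circ2 by simp
    then show ?thesis using cQ sQ Q_diff by simp
  qed
  moreover have "g 0 \<noteq> 0" by (simp add: g_def cf_nz)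
  ultimately have "Y u (- int K) b \<in> Q r" by (rule Q_unscale)
  then have "mono (K # rest) \<in> Q r" by (simp add: b_def)
  then show ?thesis using d1 Q_add by fastforce
qed

lemma caseBC:
  assumes FQr: "Fs (r - 1) \<subseteq> Q r"
  and IHE: "\<And>ys. length ys = r \<Longrightarrow> \<forall>y\<in>set ys. 1 \<le> y \<Longrightarrow> sum_list ys < E \<Longrightarrow> mono ys \<in> Q r"
  shows "length zs = r \<Longrightarrow> \<forall>z\<in>set zs. 1 \<le> z \<Longrightarrow> sum_list zs = E \<Longrightarrow> \<forall>z\<in>set zs. z \<le> 2*n+1 \<Longrightarrow> mono zs \<in> Q r"
proof (induction "count_list zs (2*n+1)" arbitrary: zs rule: less_induct)
  case less
  have IHE': "\<forall>ys. length ys = r \<longrightarrow> (\<forall>y\<in>set ys. 1 \<le> y) \<longrightarrow> sum_list ys < E \<longrightarrow> mono ys \<in> Q r"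
    using IHE by blast
  note A = caseA[OF FQr IHE']
  show ?case
  proof (cases "2*n+1 \<in> set zs")
    case False
    then have sz: "set zs \<subseteq> {1..2*n}" using less.prems
      by (auto simp: le_Suc_eq)
    have "mono zs - umon Y vac u (count_list zs) (2*n) \<in> Q r"
      using canonical[OF sz] FQr less.prems(1) by blast
    moreover have "umon Y vac u (count_list zs) (2*n) \<in> Q r"
      using umon_CanU[OF sz, of r] less.prems(1) unfolding Q_def by (auto intro: span_base)
    ultimately show ?thesis using Q_add by fastforce
  next
    case True
    define rest where "rest = remove1 (2*n+1) zs"
    have ms: "mset ((2*n+1) # rest) = mset zs" using True by (simp add: rest_def)
    have zsne: "zs \<noteq> []" using True by auto
    define M where "M = mono ((2*n+1) # rest)"
    define M' where "M' = mono (2*n # rest)"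
    have d1: "mono zs - M \<in> Q r" using perm_mono[OF zsne ms] FQr less.prems(1) by (auto simp: M_def)
    have lr: "length rest + 1 = r" using less.prems(1) True
      by (simp add: rest_def length_remove1) (metis One_nat_def Suc_pred length_pos_if_in_set)
    have rest1: "\<forall>y\<in>set rest. 1 \<le> y \<and> y \<le> 2*n+1"
      using less.prems(2,4) set_remove1_subset[of "2*n+1" zs] by (auto simp: rest_def)
    have sr: "sum_list rest + (2*n+1) = E" using sum_list_mset_eq[OF ms] less.prems(3) by simp
    have cnt: "count_list rest (2*n+1) < count_list zs (2*n+1)"
    proof -
      have "count (mset ((2*n+1) # rest)) (2*n+1) = count (mset zs) (2*n+1)" using ms by simp
      then show ?thesis by (simp add: count_mset)
    qed
    have M'Q: "M' \<in> Q r" unfolding M'_def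
      by (rule IHE) (use lr rest1 sr n_pos in auto)
    have L1: "Y \<omega> 0 M' = sc (of_nat (2*n)) M +
       (\<Sum>t<length rest. sc (of_nat (rest!t)) (mono (2*n # rest[t := Suc (rest!t)])))"
      unfolding M'_def M_def L1_mono by (simp only: length_Cons sum.lessThan_Suc_shift) simp
    define P where "P t = (rest!t = 2*n)" for t
    have TQ: "mono (2*n # rest[t := Suc (rest!t)]) - (if P t then M else 0) \<in> Q r" if t: "t < length rest" for t
    proof -
      have rt: "rest!t \<in> set rest" using t by simp
      have len': "length (2*n # rest[t := Suc (rest!t)]) = r" using lr by simp
      have sum': "sum_list (2*n # rest[t := Suc (rest!t)]) = E" using sr sum_list_upd_Suc[OF t] by simp
      have all1': "\<forall>y\<in>set (2*n # rest[t := Suc (rest!t)]). 1 \<le> y"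
        using rest1 n_pos set_update_subset_insert[of rest t "Suc (rest!t)"] by auto
      consider (a) "rest!t = 2*n" | (b) "rest!t = 2*n+1" | (c) "rest!t < 2*n"
        using rest1 rt by fastforce
      then show ?thesis
      proof cases
        case a
        have "mset (2*n # rest[t := Suc (rest!t)]) = mset ((2*n+1) # rest)"
          using t a rt by (simp add: mset_update insert_DiffM)
        then have "mono (2*n # rest[t := Suc (rest!t)]) - M \<in> Fs (r - 1)"
          using perm_mono[of "2*n # rest[t := Suc (rest!t)]" "(2*n+1) # rest"]
          by (simp add: M_def lr[symmetric] del: mono_Cons)
        then show ?thesis using FQr a by (simp add: P_def) blast
      next
        case b
        have "mono (2*n # rest[t := Suc (rest!t)]) \<in> Q r"
        proof (rule A[OF len' all1' sum'])
          show "2*n+2 \<in> set (2*n # rest[t := Suc (rest!t)])" using b t by (simp add: set_update_memI)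
        qed simp
        then show ?thesis using b by (simp add: P_def)
      next
        case c
        have "mono (2*n # rest[t := Suc (rest!t)]) \<in> Q r"
        proof (rule less.hyps[OF _ len' all1' sum'])
          have "count_list (rest[t := Suc (rest!t)]) (2*n+1) = count_list rest (2*n+1)"
            using c t by (intro count_list_upd) auto
          then show "count_list (2*n # rest[t := Suc (rest!t)]) (2*n+1) < count_list zs (2*n+1)"
            using cnt by simp
          show "\<forall>z\<in>set (2*n # rest[t := Suc (rest!t)]). z \<le> 2*n+1"
            using rest1 c set_update_subset_insert[of rest t "Suc (rest!t)"] by auto
        qed
        then show ?thesis using c by (simp add: P_def)
      qed
    qed
    have S1: "(\<Sum>t<length rest. sc (of_nat (rest!t)) (mono (2*n # rest[t := Suc (rest!t)]) - (if P t then M else 0))) \<in> Q r"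
      by (rule Q_sum, rule Q_scale, rule TQ) simp
    have S2: "(\<Sum>t<length rest. sc (of_nat (rest!t)) (if P t then M else 0)) =
        sc (of_nat (\<Sum>t<length rest. if P t then 2*n else 0)) M"
    proof -
      have "(\<Sum>t<length rest. sc (of_nat (rest!t)) (if P t then M else 0)) =
         (\<Sum>t<length rest. sc (of_nat (if P t then 2*n else 0)) M)"
        by (rule sum.cong) (auto simp: P_def)
      also have "\<dots> = sc (\<Sum>t<length rest. of_nat (if P t then 2*n else 0)) M"
        by (simp only: scale_sum_left)
      also have "\<dots> = sc (of_nat (\<Sum>t<length rest. if P t then 2*n else 0)) M"
        by (simp only: of_nat_sum)
      finally show ?thesis .
    qed
    have split: "(\<Sum>t<length rest. sc (of_nat (rest!t)) (mono (2*n # rest[t := Suc (rest!t)]))) =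
       (\<Sum>t<length rest. sc (of_nat (rest!t)) (mono (2*n # rest[t := Suc (rest!t)]) - (if P t then M else 0)))
       + (\<Sum>t<length rest. sc (of_nat (rest!t)) (if P t then M else 0))"
      by (simp add: sum.distrib[symmetric] scale_right_diff_distrib)
    have Y0Q: "Y \<omega> 0 M' \<in> Q r"
    proof -
      have "Y \<omega> 0 M' + Y \<omega> 1 M' \<in> Q r" using On_L On_Q by blast
      moreover have "Y \<omega> 1 M' \<in> Q r" unfolding M'_def L0_mono using M'Q Q_scale by (simp add: M'_def)
      ultimately show ?thesis using Q_diff by fastforce
    qed
    have "sc (of_nat (2*n + (\<Sum>t<length rest. if P t then 2*n else 0))) M =
      Y \<omega> 0 M' - (\<Sum>t<length rest. sc (of_nat (rest!t)) (mono (2*n # rest[t := Suc (rest!t)]) - (if P t then M else 0)))"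
      unfolding L1 split S2 by (simp add: scale_left_distrib)
    also have "\<dots> \<in> Q r" using Y0Q S1 Q_diff by blast
    finally have "sc (of_nat (2*n + (\<Sum>t<length rest. if P t then 2*n else 0))) M \<in> Q r" .
    moreover have "(of_nat (2*n + (\<Sum>t<length rest. if P t then 2*n else 0)) :: complex) \<noteq> 0"
      using n_pos by (simp only: of_nat_eq_0_iff)
    ultimately have "M \<in> Q r" by (rule Q_unscale)
    then show ?thesis using d1 Q_add by fastforce
  qed
qed

lemma spanning: "\<forall>x\<in>set xs. 1 \<le> x \<Longrightarrow> mono xs \<in> Q (length xs)"
proof (induction "length xs" arbitrary: xs rule: less_induct)
  case less
  define r where "r = length xs"
  have FQr: "Fs (r - 1) \<subseteq> Q r" by (rule FQ) (use less.hyps r_def in auto)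
  have main: "\<forall>zs. length zs = r \<longrightarrow> (\<forall>z\<in>set zs. 1 \<le> z) \<longrightarrow> sum_list zs = E \<longrightarrow> mono zs \<in> Q r" for E
  proof (induction E rule: less_induct)
    case (less E)
    have IHE': "\<forall>ys. length ys = r \<longrightarrow> (\<forall>y\<in>set ys. 1 \<le> y) \<longrightarrow> sum_list ys < E \<longrightarrow> mono ys \<in> Q r"
      using less.IH by blast
    have IHE: "\<And>ys. length ys = r \<Longrightarrow> \<forall>y\<in>set ys. 1 \<le> y \<Longrightarrow> sum_list ys < E \<Longrightarrow> mono ys \<in> Q r"
      using less.IH by blast
    show ?case
    proof (intro allI impI)
      fix zs :: "nat list" assume zs: "length zs = r" "\<forall>z\<in>set zs. 1 \<le> z" "sum_list zs = E"
      show "mono zs \<in> Q r"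
      proof (cases "\<exists>K\<in>set zs. K \<ge> 2*n+2")
        case True
        then obtain K where "K \<in> set zs" "K \<ge> 2*n+2" by blast
        then show ?thesis using caseA[OF FQr IHE' zs] by blast
      next
        case False
        then have "\<forall>z\<in>set zs. z \<le> 2*n+1" by auto
        then show ?thesis using caseBC[OF FQr IHE zs] by blast
      qed
    qed
  qed
  then show ?case using less.prems r_def by blast
qed

lemma Fs_Q: "Fs r \<subseteq> Q r"
  unfolding Fs_def Q_def[of r]
proof (rule span_minimal[OF _ subspace_span], clarify)
  fix ys :: "nat list" assume ys: "length ys \<le> r" "\<forall>x\<in>set ys. 1 \<le> x"
  then show "mono ys \<in> span (On \<union> CanU r)"
    using spanning[OF ys(2)] Q_mono[OF ys(1)] unfolding Q_def by blast
qed

end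



context vsetup
begin

lemma Fs_add: "x \<in> Fs r \<Longrightarrow> y \<in> Fs r \<Longrightarrow> x + y \<in> Fs r" unfolding Fs_def by (rule span_add)
lemma Fs_diff: "x \<in> Fs r \<Longrightarrow> y \<in> Fs r \<Longrightarrow> x - y \<in> Fs r" unfolding Fs_def by (rule span_diff)
lemma Fs_sum: "(\<And>i. i \<in> A \<Longrightarrow> f i \<in> Fs r) \<Longrightarrow> sum f A \<in> Fs r" unfolding Fs_def by (rule span_sum)
lemma Fs_zero: "0 \<in> Fs r" unfolding Fs_def by (rule span_zero)

lemma assoc:
  "\<exists>N0. \<forall>N\<ge>N0. Y (Y u (-1) B) q x =
     (\<Sum>i<N. Y u (- int i - 1) (Y B (q + int i) x) + Y B (q - int i - 1) (Y u (int i) x))"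
proof -
  obtain N0 where N0: "\<forall>N\<ge>N0. \<forall>i\<ge>N. Y u (-1 + int i) B = 0 \<and> Y B (q + int i) x = 0 \<and> Y u (0 + int i) x = 0"
    using borcherds_N by blast
  have coef: "(-1) ^ i * (of_int (-1) gchoose i) = (1::complex)" for i
  proof -
    have "(of_int (-1) gchoose i) = ((- 1 :: complex) gchoose i)" by simp
    also have "\<dots> = (-1) ^ i * ((1 + of_nat i - 1) gchoose i)" by (rule gbinomial_minus)
    also have "((1 + of_nat i - 1) gchoose i) = (of_nat i gchoose i :: complex)" by simp
    also have "\<dots> = 1" by (simp add: binomial_gbinomial[symmetric])
    finally show ?thesis by (simp add: power_mult_distrib[symmetric])
  qed
  show ?thesis
  proof (rule exI[of _ "Suc N0"], intro allI impI)
    fix N assume N: "N \<ge> Suc N0"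
    have B: "(\<Sum>i<N. sc ((of_int 0) gchoose i) (Y (Y u (-1 + int i) B) (0 + q - int i) x)) =
        (\<Sum>i<N. sc ((-1) ^ i * ((of_int (-1)) gchoose i))
            (Y u (0 + (-1) - int i) (Y B (q + int i) x) -
             sc ((-1) powi (-1)) (Y B (q + (-1) - int i) (Y u (0 + int i) x))))"
      by (rule borcherds) (use N0 N in auto)
    have L: "(\<Sum>i<N. sc ((of_int 0) gchoose i) (Y (Y u (-1 + int i) B) (0 + q - int i) x)) = Y (Y u (-1) B) q x"
    proof -
      have "(\<Sum>i<N. sc ((of_int 0) gchoose i) (Y (Y u (-1 + int i) B) (0 + q - int i) x)) =
         (\<Sum>i<1. sc ((of_int 0) gchoose i) (Y (Y u (-1 + int i) B) (0 + q - int i) x))"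
        by (rule sum_cut) (use N in \<open>auto simp: gbinomial_0_left\<close>)
      then show ?thesis by simp
    qed
    have R: "(\<Sum>i<N. sc ((-1) ^ i * ((of_int (-1)) gchoose i))
            (Y u (0 + (-1) - int i) (Y B (q + int i) x) -
             sc ((-1) powi (-1)) (Y B (q + (-1) - int i) (Y u (0 + int i) x)))) =
        (\<Sum>i<N. Y u (- int i - 1) (Y B (q + int i) x) + Y B (q - int i - 1) (Y u (int i) x))"
    proof (rule sum.cong[OF refl])
      fix i
      have e1: "0 + (-1) - int i = - int i - 1" by simp
      have e2: "q + (-1) - int i = q - int i - 1" by simp
      have e3: "(-1::complex) powi (-1) = -1" by (simp add: power_int_minus)
      show "sc ((-1) ^ i * ((of_int (-1)) gchoose i))
            (Y u (0 + (-1) - int i) (Y B (q + int i) x) -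
             sc ((-1) powi (-1)) (Y B (q + (-1) - int i) (Y u (0 + int i) x))) =
          Y u (- int i - 1) (Y B (q + int i) x) + Y B (q - int i - 1) (Y u (int i) x)"
        unfolding coef e1 e2 e3 by simp
    qed
    show "Y (Y u (-1) B) q x =
     (\<Sum>i<N. Y u (- int i - 1) (Y B (q + int i) x) + Y B (q - int i - 1) (Y u (int i) x))"
      using B L R by simp
  qed
qed

abbreviation Bp :: "nat \<Rightarrow> 'v" where "Bp p \<equiv> (Y u (-1) ^^ p) vac"

lemma B_Fs: "x \<in> Fs s \<Longrightarrow> Y (Bp p) q x \<in> Fs (s + p)"
proof (induction p arbitrary: q x s)
  case 0 then show ?case by (simp add: vac_Y Fs_zero)
next
  case (Suc p)
  obtain N0 where N0: "\<forall>N\<ge>N0. Y (Y u (-1) (Bp p)) q x =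
     (\<Sum>i<N. Y u (- int i - 1) (Y (Bp p) (q + int i) x) + Y (Bp p) (q - int i - 1) (Y u (int i) x))"
    using assoc by blast
  have "Y (Bp (Suc p)) q x =
     (\<Sum>i<N0. Y u (- int i - 1) (Y (Bp p) (q + int i) x) + Y (Bp p) (q - int i - 1) (Y u (int i) x))"
    using N0 by simp
  also have "\<dots> \<in> Fs (s + Suc p)"
  proof (rule Fs_sum, rule Fs_add)
    fix i
    have "Y (Bp p) (q + int i) x \<in> Fs (s + p)" by (rule Suc.IH[OF Suc.prems])
    then show "Y u (- int i - 1) (Y (Bp p) (q + int i) x) \<in> Fs (s + Suc p)"
      using neg_mode_Fs'[of "- int i - 1"] by simp
    have "Y u (int i) x \<in> Fs s" by (rule pos_mode_Fs) (use Suc.prems in auto)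
    then have "Y (Bp p) (q - int i - 1) (Y u (int i) x) \<in> Fs (s + p)" by (rule Suc.IH)
    then show "Y (Bp p) (q - int i - 1) (Y u (int i) x) \<in> Fs (s + Suc p)"
      using Fs_mono[of "s + p" "s + Suc p"] by auto
  qed
  finally show ?case .
qed

primrec tsum :: "nat \<Rightarrow> int \<Rightarrow> 'v \<Rightarrow> 'v" where
  "tsum 0 S x = (if S = 0 then x else 0)"
| "tsum (Suc p) S x = (\<Sum>i<nat S. Y u (- int i - 1) (tsum p (S - int i - 1) x))"

lemma tsum_zero: "S < int p \<Longrightarrow> tsum p S x = 0"
  by (induction p arbitrary: S) auto

lemma tsum_in:
  "subspace T \<Longrightarrow> (\<forall>xs. length xs = p \<longrightarrow> (\<forall>z\<in>set xs. 1 \<le> z) \<longrightarrow> int (sum_list xs) = S \<longrightarrow> monoOn xs x \<in> T)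
   \<Longrightarrow> tsum p S x \<in> T"
proof (induction p arbitrary: S T)
  case 0
  show ?case
  proof (cases "S = 0")
    case True
    then have "monoOn [] x \<in> T" using 0 by force
    then show ?thesis using True by simp
  next
    case False then show ?thesis using 0 by (simp add: subspace_0)
  qed
next
  case (Suc p)
  show ?case unfolding tsum.simps
  proof (rule subspace_sum[OF Suc.prems(1)])
    fix i assume "i \<in> {..<nat S}"
    have "tsum p (S - int i - 1) x \<in> {y. Y u (- int i - 1) y \<in> T}"
    proof (rule Suc.IH[OF subspace_Ypre[OF Suc.prems(1)]], intro allI impI)
      fix xs :: "nat list" assume xs: "length xs = p" "\<forall>z\<in>set xs. 1 \<le> z" "int (sum_list xs) = S - int i - 1"
      have h: "monoOn (Suc i # xs) x \<in> T"
        using Suc.prems(2)[rule_format, of "Suc i # xs"] xs by force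
      have "- int i - 1 = - int (Suc i)" by simp
      then have "Y u (- int i - 1) (monoOn xs x) = monoOn (Suc i # xs) x" by (simp only: monoOn_Cons)
      then show "monoOn xs x \<in> {y. Y u (- int i - 1) y \<in> T}" using h by simp
    qed
    then show "Y u (- int i - 1) (tsum p (S - int i - 1) x) \<in> T" by simp
  qed
qed

lemma tsum_diag: "tsum p (int p) x = monoOn (replicate p 1) x"
proof (induction p)
  case 0 then show ?case by simp
next
  case (Suc p)
  have "tsum (Suc p) (int (Suc p)) x = (\<Sum>i<Suc p. Y u (- int i - 1) (tsum p (int (Suc p) - int i - 1) x))"
    by (simp only: tsum.simps nat_int)
  also have "\<dots> = Y u (- int 0 - 1) (tsum p (int (Suc p) - int 0 - 1) x) +
     (\<Sum>i<p. Y u (- int (Suc i) - 1) (tsum p (int (Suc p) - int (Suc i) - 1) x))"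
    by (rule sum.lessThan_Suc_shift)
  also have "(\<Sum>i<p. Y u (- int (Suc i) - 1) (tsum p (int (Suc p) - int (Suc i) - 1) x)) = 0"
    by (intro sum.neutral) (auto simp: tsum_zero)
  also have "Y u (- int 0 - 1) (tsum p (int (Suc p) - int 0 - 1) x) + 0 = Y u (- 1) (tsum p (int p) x)"
    by simp
  finally show ?case using Suc by simp
qed

lemma B_exact0: "Y (Bp 0) q x = tsum 0 (int 0 - q - 1) x"
  by (simp add: vac_Y)

lemma B_tsum:
  assumes ys: "\<forall>y\<in>set ys. 1 \<le> y"
  shows "Y (Bp p) q (mono ys) - tsum p (int p - q - 1) (mono ys) \<in> Fs (length ys + p - 1)"
proof (induction p arbitrary: q)
  case 0 then show ?case by (simp add: vac_Y Fs_zero)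
next
  case (Suc p)
  define x where "x = mono ys"
  define s where "s = length ys"
  have xF: "x \<in> Fs s" unfolding x_def s_def by (rule mono_Fs) (use ys in auto)
  obtain N0 where N0: "\<forall>N\<ge>N0. Y (Y u (-1) (Bp p)) q x =
     (\<Sum>i<N. Y u (- int i - 1) (Y (Bp p) (q + int i) x) + Y (Bp p) (q - int i - 1) (Y u (int i) x))"
    using assoc by blast
  define N where "N = N0 + nat (int p - q)"
  have e1: "Y (Bp (Suc p)) q x =
     (\<Sum>i<N. Y u (- int i - 1) (Y (Bp p) (q + int i) x) + Y (Bp p) (q - int i - 1) (Y u (int i) x))"
    using N0 N_def by simp
  have e2: "tsum (Suc p) (int (Suc p) - q - 1) x = (\<Sum>i<N. Y u (- int i - 1) (tsum p (int p - (q + int i) - 1) x))"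
  proof -
    have "tsum (Suc p) (int (Suc p) - q - 1) x = (\<Sum>i<nat (int p - q). Y u (- int i - 1) (tsum p (int p - q - int i - 1) x))"
      by simp
    also have "\<dots> = (\<Sum>i<N. Y u (- int i - 1) (tsum p (int p - q - int i - 1) x))"
      by (rule sum_cut[symmetric]) (auto simp: N_def tsum_zero)
    finally show ?thesis by (simp add: algebra_simps)
  qed
  have "Y (Bp (Suc p)) q x - tsum (Suc p) (int (Suc p) - q - 1) x =
     (\<Sum>i<N. Y u (- int i - 1) (Y (Bp p) (q + int i) x - tsum p (int p - (q + int i) - 1) x))
     + (\<Sum>i<N. Y (Bp p) (q - int i - 1) (Y u (int i) x))"
    unfolding e1 e2 by (simp add: sum.distrib Y_diff sum_subtractf algebra_simps)
  also have "\<dots> \<in> Fs (s + Suc p - 1)"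
  proof (rule Fs_add; rule Fs_sum)
    fix i
    show "Y u (- int i - 1) (Y (Bp p) (q + int i) x - tsum p (int p - (q + int i) - 1) x) \<in> Fs (s + Suc p - 1)"
    proof (cases "p = 0")
      case True
      then show ?thesis by (simp add: vac_Y Fs_zero)
    next
      case False
      have "Y (Bp p) (q + int i) x - tsum p (int p - (q + int i) - 1) x \<in> Fs (s + p - 1)"
        using Suc.IH unfolding x_def s_def .
      then have "Y u (- int i - 1) (Y (Bp p) (q + int i) x - tsum p (int p - (q + int i) - 1) x) \<in> Fs (Suc (s + p - 1))"
        by (rule neg_mode_Fs'[rotated]) simp
      then show ?thesis using False by simp
    qed
    have "Y u (int i) x \<in> Fs s" by (rule pos_mode_Fs) (use xF in auto)
    then show "Y (Bp p) (q - int i - 1) (Y u (int i) x) \<in> Fs (s + Suc p - 1)"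
      using B_Fs by simp
  qed
  finally show ?case unfolding x_def s_def .
qed

end



lemma count_rep: "count_list (replicate k a) a = k"
  by (induction k) auto

lemma count_le_len: "count_list xs a \<le> length xs"
  by (induction xs) auto

lemma count_eq_len_sum: "\<forall>x\<in>set xs. 1 \<le> x \<Longrightarrow> count_list xs 1 = length xs \<Longrightarrow> sum_list xs = length (xs::nat list)"
proof (induction xs)
  case Nil then show ?case by simp
next
  case (Cons a xs)
  have "count_list xs 1 \<le> length xs" by (rule count_le_len)
  then show ?case using Cons by (auto split: if_splits)
qed

lemma sum_ge: "x \<in> set xs \<Longrightarrow> \<forall>y\<in>set xs. 1 \<le> y \<Longrightarrow> x + (length xs - 1) \<le> sum_list (xs::nat list)"
proof (induction xs)
  case Nil then show ?case by simp
next
  case (Cons a xs)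
  show ?case
  proof (cases "x = a")
    case True
    have "length xs \<le> sum_list xs" using Cons.prems(2) by (induction xs) auto
    then show ?thesis using True by simp
  next
    case False
    then have "x \<in> set xs" using Cons.prems by simp
    then have "x + (length xs - 1) \<le> sum_list xs" using Cons by simp
    moreover have "xs \<noteq> []" using \<open>x \<in> set xs\<close> by auto
    ultimately show ?thesis using Cons.prems(2) by (cases xs) auto
  qed
qed

lemma sum_eq_len_rep: "\<forall>y\<in>set xs. 1 \<le> y \<Longrightarrow> sum_list xs = length xs \<Longrightarrow> xs = replicate (length xs) (1::nat)"
proof (induction xs)
  case Nil then show ?case by simp
next
  case (Cons a xs)
  have "length xs \<le> sum_list xs" using Cons.prems(1) by (induction xs) auto
  then have "a = 1" "sum_list xs = length xs" using Cons.prems by auto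
  then show ?case using Cons by simp
qed

lemma coef_id:
  "(\<Sum>m\<le>n. (-1)^m * of_nat ((m+n) choose n) * ((of_int (A + int n) :: complex) gchoose (n+m))) =
   (of_int (A + int n) gchoose n) * (\<Sum>m\<le>n. (-1)^m * (of_int A gchoose m))"
proof -
  have t: "of_nat ((m+n) choose n) * ((of_int (A + int n) :: complex) gchoose (n+m)) =
       (of_int (A + int n) gchoose n) * (of_int A gchoose m)" for m
  proof -
    have "((of_int (A + int n) :: complex) gchoose (n+m)) * (of_nat (n+m) gchoose n) =
      (of_int (A + int n) gchoose n) * ((of_int (A + int n) - of_nat n) gchoose (n + m - n))"
      by (rule gbinomial_trinomial_revision) simp
    moreover have "(of_int (A + int n) - of_nat n :: complex) = of_int A" by simp
    moreover have "of_nat ((m+n) choose n) = (of_nat (n+m) gchoose n :: complex)"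
      by (simp add: binomial_gbinomial add.commute)
    ultimately show ?thesis by (simp add: mult.commute)
  qed
  have "(\<Sum>m\<le>n. (-1)^m * of_nat ((m+n) choose n) * ((of_int (A + int n) :: complex) gchoose (n+m))) =
     (\<Sum>m\<le>n. (of_int (A + int n) gchoose n) * ((-1)^m * (of_int A gchoose m)))"
    by (rule sum.cong[OF refl]) (simp only: mult.assoc t, simp add: algebra_simps)
  also have "\<dots> = (of_int (A + int n) gchoose n) * (\<Sum>m\<le>n. (-1)^m * (of_int A gchoose m))"
    by (simp only: sum_distrib_left)
  finally show ?thesis .
qed

context vsetup
begin

definition Ntot :: "(nat \<Rightarrow> nat) \<Rightarrow> nat" where "Ntot i = (\<Sum>j\<in>{1..2*n}. i j)"

definition Low :: "(nat \<Rightarrow> nat) \<Rightarrow> 'v set" where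
  "Low i = {umon Y vac u i' (2 * n) | i'.
             (\<Sum>j\<in>{1..2*n}. i' j) < (\<Sum>j\<in>{1..2*n}. i j) \<or>
             ((\<Sum>j\<in>{1..2*n}. i' j) = (\<Sum>j\<in>{1..2*n}. i j) \<and> i' 1 < i 1)}"

definition W :: "(nat \<Rightarrow> nat) \<Rightarrow> 'v set" where "W i = span (On \<union> Low i)"

lemma W_add: "x \<in> W i \<Longrightarrow> y \<in> W i \<Longrightarrow> x + y \<in> W i" unfolding W_def by (rule span_add)
lemma W_diff: "x \<in> W i \<Longrightarrow> y \<in> W i \<Longrightarrow> x - y \<in> W i" unfolding W_def by (rule span_diff)
lemma W_scale: "x \<in> W i \<Longrightarrow> sc t x \<in> W i" unfolding W_def by (rule span_scale)
lemma W_sum: "(\<And>j. j \<in> A \<Longrightarrow> f j \<in> W i) \<Longrightarrow> sum f A \<in> W i" unfolding W_def by (rule span_sum)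
lemma W_zero: "0 \<in> W i" unfolding W_def by (rule span_zero)
lemma subspace_W: "subspace (W i)" unfolding W_def by simp
lemma W_unscale: "sc t x \<in> W i \<Longrightarrow> t \<noteq> 0 \<Longrightarrow> x \<in> W i"
  using W_scale[of "sc t x" i "1/t"] by simp
lemma On_W: "On \<subseteq> W i" unfolding W_def using span_superset by blast

lemma Fs_W: "Ntot i \<ge> 1 \<Longrightarrow> Fs (Ntot i - 1) \<subseteq> W i"
proof -
  assume N1: "Ntot i \<ge> 1"
  have "CanU (Ntot i - 1) \<subseteq> Low i" unfolding CanU_def Low_def using N1 by (auto simp: Ntot_def)
  then have "Q (Ntot i - 1) \<subseteq> W i" unfolding Q_def W_def by (intro span_mono) blast
  then show ?thesis using Fs_Q by blast
qed

lemma W2: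
  assumes N1: "Ntot i \<ge> 1" and L: "set L \<subseteq> {1..2*n}" "length L = Ntot i" "count_list L 1 < i 1"
  shows "mono L \<in> W i"
proof -
  have "mono L - umon Y vac u (count_list L) (2*n) \<in> Fs (Ntot i - 1)"
    using canonical[OF L(1)] L(2) by simp
  then have "mono L - umon Y vac u (count_list L) (2*n) \<in> W i"
    using Fs_W[OF N1] by blast
  moreover have "umon Y vac u (count_list L) (2*n) \<in> Low i"
    unfolding Low_def using sum_count_L[OF L(1)] L(2,3) by (auto simp: Ntot_def)
  then have "umon Y vac u (count_list L) (2*n) \<in> W i" unfolding W_def by (auto intro: span_base)
  ultimately show ?thesis using W_add by fastforce
qed

lemma W3:
  assumes N1: "Ntot i \<ge> 1" and zs: "set zs \<subseteq> {1..2*n}" "length zs + 1 = Ntot i" "count_list zs 1 < i 1"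
  shows "mono ((2*n+1) # zs) \<in> W i"
proof -
  define M where "M = mono ((2*n+1) # zs)"
  define M' where "M' = mono (2*n # zs)"
  have FW: "Fs (Ntot i - 1) \<subseteq> W i" by (rule Fs_W[OF N1])
  have M'W: "M' \<in> W i" unfolding M'_def
    by (rule W2[OF N1]) (use zs n_pos in auto)
  have L1: "Y \<omega> 0 M' = sc (of_nat (2*n)) M +
     (\<Sum>t<length zs. sc (of_nat (zs!t)) (mono (2*n # zs[t := Suc (zs!t)])))"
    unfolding M'_def M_def L1_mono by (simp only: length_Cons sum.lessThan_Suc_shift) simp
  define P where "P t = (zs!t = 2*n)" for t
  have TW: "mono (2*n # zs[t := Suc (zs!t)]) - (if P t then M else 0) \<in> W i" if t: "t < length zs" for t
  proof -
    have rt: "zs!t \<in> set zs" using t by simp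
    show ?thesis
    proof (cases "zs!t = 2*n")
      case a: True
      have "mset (2*n # zs[t := Suc (zs!t)]) = mset ((2*n+1) # zs)"
        using t a rt by (simp add: mset_update insert_DiffM)
      then have "mono (2*n # zs[t := Suc (zs!t)]) - M \<in> Fs (Ntot i - 1)"
        using perm_mono[of "2*n # zs[t := Suc (zs!t)]" "(2*n+1) # zs"]
        by (simp add: M_def zs(2)[symmetric] del: mono_Cons)
      then show ?thesis using FW a by (simp add: P_def) blast
    next
      case False
      then have c: "zs!t < 2*n" using zs(1) rt by fastforce
      have "mono (2*n # zs[t := Suc (zs!t)]) \<in> W i"
      proof (rule W2[OF N1])
        show "set (2*n # zs[t := Suc (zs!t)]) \<subseteq> {1..2*n}"
          using zs(1) c n_pos set_update_subset_insert[of zs t "Suc (zs!t)"] by auto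
        show "length (2*n # zs[t := Suc (zs!t)]) = Ntot i" using zs(2) by simp
        have "count_list (zs[t := Suc (zs!t)]) 1 \<le> count_list zs 1"
        proof (cases "zs!t = 1")
          case True
          then show ?thesis using t
            by (induction zs arbitrary: t) (auto split: nat.splits)
        next
          case False
          have "zs!t \<ge> 1" using zs(1) rt by auto
          then show ?thesis using t False by (simp add: count_list_upd)
        qed
        then show "count_list (2*n # zs[t := Suc (zs!t)]) 1 < i 1" using zs(3) n_pos by simp
      qed
      then show ?thesis using False by (simp add: P_def)
    qed
  qed
  have S1: "(\<Sum>t<length zs. sc (of_nat (zs!t)) (mono (2*n # zs[t := Suc (zs!t)]) - (if P t then M else 0))) \<in> W i"
    by (rule W_sum, rule W_scale, rule TW) simp
  have S2: "(\<Sum>t<length zs. sc (of_nat (zs!t)) (if P t then M else 0)) =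
      sc (of_nat (\<Sum>t<length zs. if P t then 2*n else 0)) M"
  proof -
    have "(\<Sum>t<length zs. sc (of_nat (zs!t)) (if P t then M else 0)) =
       (\<Sum>t<length zs. sc (of_nat (if P t then 2*n else 0)) M)"
      by (rule sum.cong) (auto simp: P_def)
    also have "\<dots> = sc (\<Sum>t<length zs. of_nat (if P t then 2*n else 0)) M"
      by (simp only: scale_sum_left)
    also have "\<dots> = sc (of_nat (\<Sum>t<length zs. if P t then 2*n else 0)) M"
      by (simp only: of_nat_sum)
    finally show ?thesis .
  qed
  have split: "(\<Sum>t<length zs. sc (of_nat (zs!t)) (mono (2*n # zs[t := Suc (zs!t)]))) =
     (\<Sum>t<length zs. sc (of_nat (zs!t)) (mono (2*n # zs[t := Suc (zs!t)]) - (if P t then M else 0)))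
     + (\<Sum>t<length zs. sc (of_nat (zs!t)) (if P t then M else 0))"
    by (simp add: sum.distrib[symmetric] scale_right_diff_distrib)
  have Y0W: "Y \<omega> 0 M' \<in> W i"
  proof -
    have "Y \<omega> 0 M' + Y \<omega> 1 M' \<in> W i" using On_L On_W by blast
    moreover have "Y \<omega> 1 M' \<in> W i" unfolding M'_def L0_mono using M'W W_scale by (simp add: M'_def)
    ultimately show ?thesis using W_diff by fastforce
  qed
  have "sc (of_nat (2*n + (\<Sum>t<length zs. if P t then 2*n else 0))) M =
    Y \<omega> 0 M' - (\<Sum>t<length zs. sc (of_nat (zs!t)) (mono (2*n # zs[t := Suc (zs!t)]) - (if P t then M else 0)))"
    unfolding L1 split S2 by (simp add: scale_left_distrib)
  also have "\<dots> \<in> W i" using Y0W S1 W_diff by blast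
  finally have "sc (of_nat (2*n + (\<Sum>t<length zs. if P t then 2*n else 0))) M \<in> W i" .
  moreover have "(of_nat (2*n + (\<Sum>t<length zs. if P t then 2*n else 0)) :: complex) \<noteq> 0"
    using n_pos by (simp only: of_nat_eq_0_iff)
  ultimately have "M \<in> W i" by (rule W_unscale)
  then show ?thesis by (simp add: M_def)
qed

lemma W4:
  assumes p1: "i 1 \<ge> 1" and N: "length ys + i 1 = Ntot i" and ys: "set ys \<subseteq> {2..2*n}"
  and xs: "length xs = i 1" "\<forall>x\<in>set xs. 1 \<le> x" "sum_list xs = i 1 + e" "1 \<le> e" "e \<le> 2*n"
  shows "mono (xs @ ys) \<in> W i"
proof -
  have N1: "Ntot i \<ge> 1" using p1 N by simp
  have c0: "count_list ys 1 = 0" using ys by (auto simp: count_list_0_iff)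
  show ?thesis
  proof (cases "\<forall>x\<in>set xs. x \<le> 2*n")
    case True
    have "count_list xs 1 \<noteq> length xs"
      using count_eq_len_sum[OF xs(2)] xs(1,3,4) by auto
    then have cl: "count_list xs 1 < i 1" using count_le_len[of xs 1] xs(1) by simp
    show ?thesis
    proof (rule W2[OF N1])
      show "set (xs @ ys) \<subseteq> {1..2*n}" using True xs(2) ys by auto
      show "length (xs @ ys) = Ntot i" using N xs(1) by simp
      show "count_list (xs @ ys) 1 < i 1" using cl c0 by simp
    qed
  next
    case False
    then obtain x where x: "x \<in> set xs" "x > 2*n" by (auto simp: not_le)
    have "x + (length xs - 1) \<le> sum_list xs" by (rule sum_ge[OF x(1) xs(2)])
    then have xe: "x = 2*n+1" "e = 2*n" using x(2) xs(1,3,5) p1 by auto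
    define rest where "rest = remove1 x xs"
    have msx: "mset xs = add_mset x (mset rest)" using x(1) by (simp add: rest_def)
    have lr: "length rest = i 1 - 1" using x(1) xs(1) by (simp add: rest_def length_remove1)
    have r1: "\<forall>y\<in>set rest. 1 \<le> y" using xs(2) set_remove1_subset[of x xs] by (auto simp: rest_def)
    have "sum_list xs = x + sum_list rest" using sum_list_mset_eq[of xs "x # rest"] msx by simp
    then have "sum_list rest = length rest" using xe xs(3) lr p1 by simp
    then have rr: "rest = replicate (i 1 - 1) 1" using sum_eq_len_rep[OF r1] lr by simp
    define zs where "zs = replicate (i 1 - 1) 1 @ ys"
    have ms: "mset ((2*n+1) # zs) = mset (xs @ ys)" using msx rr xe by (simp add: zs_def)
    have ne: "xs @ ys \<noteq> []" using x(1) by auto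
    have "mono (xs @ ys) - mono ((2*n+1) # zs) \<in> Fs (Ntot i - 1)"
      using perm_mono[OF ne ms] N[symmetric] xs(1) by (simp add: add.commute del: mono_Cons)
    then have d: "mono (xs @ ys) - mono ((2*n+1) # zs) \<in> W i" using Fs_W[OF N1] by blast
    have "mono ((2*n+1) # zs) \<in> W i"
    proof (rule W3[OF N1])
      show "set zs \<subseteq> {1..2*n}" using ys n_pos by (auto simp: zs_def)
      show "length zs + 1 = Ntot i" using N p1 by (simp add: zs_def)
      show "count_list zs 1 < i 1" using c0 p1 by (simp add: zs_def count_rep)
    qed
    then show ?thesis using d W_add by fastforce
  qed
qed

end



context vsetup
begin

lemma main_W:
  "sc ((of_int (int (i 1) * k + int n) gchoose n) * (\<Sum>m\<le>n. (-1)^m * (of_int (int (i 1) * k) gchoose m)))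
      (umon Y vac u i (2*n))
   - star_n sc Y n (int (i 1) * k) ((Y u (-1) ^^ i 1) vac) (umon Y vac u (i(1 := 0)) (2*n)) \<in> W i"
proof -
  define p where "p = i 1"
  define ys where "ys = canon (i(1:=0)) (2*n)"
  define v where "v = mono ys"
  define U where "U = umon Y vac u i (2*n)"
  define A where "A = int p * k"
  have n2: "2*n \<ge> 1" using n_pos by simp
  have cs: "canon i (2*n) = ys @ replicate p 1" unfolding ys_def p_def by (rule canon_split[OF n2])
  have Ueq: "U = mono (ys @ replicate p 1)" unfolding U_def umon_canon cs ..
  have veq: "umon Y vac u (i(1 := 0)) (2*n) = v" by (simp add: umon_canon v_def ys_def)
  have N: "length ys + p = Ntot i"
    using length_canon[of i "2*n"] unfolding cs Ntot_def by simp
  have ysS: "set ys \<subseteq> {2..2*n}"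
  proof
    fix y assume "y \<in> set ys"
    then have "y \<in> {1..2*n}" "(i(1:=0)) y > 0" using set_canon[of "i(1:=0)" "2*n"] unfolding ys_def by auto
    then show "y \<in> {2..2*n}" by (cases "y = 1") auto
  qed
  have ys1: "\<forall>y\<in>set ys. 1 \<le> y" using ysS by auto
  have D: "Y (Bp p) (int j - (int n + int m + 1)) v - (if j = n + m then U else 0) \<in> W i"
    if m: "m \<le> n" for m j
  proof (cases "p = 0")
    case True
    then have "U = v" using Ueq v_def by simp
    then show ?thesis using True by (simp add: vac_Y W_zero)
  next
    case False
    then have p1: "p \<ge> 1" by simp
    have N1: "Ntot i \<ge> 1" using N p1 by simp
    define q where "q = int j - (int n + int m + 1)"
    have err: "Y (Bp p) q v - tsum p (int p - q - 1) v \<in> W i"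
    proof -
      have "Y (Bp p) q v - tsum p (int p - q - 1) v \<in> Fs (Ntot i - 1)"
        using B_tsum[OF ys1, of p q] N by (simp add: v_def)
      then show ?thesis using Fs_W[OF N1] by blast
    qed
    have G: "tsum p (int p - q - 1) v - (if j = n + m then U else 0) \<in> W i"
    proof -
      consider (gt) "j > n + m" | (eq) "j = n + m" | (lt) "j < n + m" by linarith
      then show ?thesis
      proof cases
        case gt
        then have "tsum p (int p - q - 1) v = 0" by (intro tsum_zero) (simp add: q_def)
        then show ?thesis using gt by (simp add: W_zero)
      next
        case eq
        then have "int p - q - 1 = int p" by (simp add: q_def)
        then have t: "tsum p (int p - q - 1) v = mono (replicate p 1 @ ys)"
          by (simp add: tsum_diag v_def mono_append)
        have ne: "ys @ replicate p 1 \<noteq> []" using p1 by simp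
        have "mono (ys @ replicate p 1) - mono (replicate p 1 @ ys) \<in> Fs (Ntot i - 1)"
          using perm_mono[OF ne, of "replicate p 1 @ ys"] N by (simp add: add.commute)
        then have "U - tsum p (int p - q - 1) v \<in> W i" using Fs_W[OF N1] t Ueq by auto
        then have "sc (-1) (U - tsum p (int p - q - 1) v) \<in> W i" by (rule W_scale)
        then have "tsum p (int p - q - 1) v - U \<in> W i" by simp
        then show ?thesis using eq by simp
      next
        case lt
        define e where "e = n + m - j"
        have e: "1 \<le> e" "e \<le> 2*n" "int p - q - 1 = int (p + e)" using lt m by (auto simp: e_def q_def)
        have "tsum p (int (p + e)) v \<in> W i"
        proof (rule tsum_in[OF subspace_W], intro allI impI)
          fix xs :: "nat list" assume xs: "length xs = p" "\<forall>z\<in>set xs. 1 \<le> z" "int (sum_list xs) = int (p + e)"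
          have "mono (xs @ ys) \<in> W i"
            by (rule W4) (use p1 N ysS xs e in \<open>auto simp: p_def\<close>)
          then show "monoOn xs v \<in> W i" by (simp add: v_def mono_append)
        qed
        then have "tsum p (int p - q - 1) v \<in> W i" using e(3) by (simp only: of_nat_add)
        then show ?thesis using lt by simp
      qed
    qed
    have "Y (Bp p) q v - (if j = n + m then U else 0) =
      (Y (Bp p) q v - tsum p (int p - q - 1) v) + (tsum p (int p - q - 1) v - (if j = n + m then U else 0))"
      by simp
    then show ?thesis using err G W_add unfolding q_def by metis
  qed
  obtain T where T: "\<forall>j'\<ge>T. Y (Bp p) j' v = 0" using trunc by blast
  define J where "J = nat T + 2*n + 2"
  define b where "b j = (of_int (A + int n) gchoose j :: complex)" for j
  define c where "c m = ((-1)^m * of_nat ((m+n) choose n) :: complex)" for m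
  define Dm where "Dm m j = Y (Bp p) (int j - (int n + int m + 1)) v - (if j = n + m then U else 0)" for m j
  have res: "res_term sc Y (A + int n) (int n + int m + 1) (Bp p) v =
     (\<Sum>j<J. sc (b j) (Dm m j)) + sc (b (n + m)) U" if m: "m \<le> n" for m
  proof -
    have "res_term sc Y (A + int n) (int n + int m + 1) (Bp p) v =
      (\<Sum>j<J. sc (b j) (Y (Bp p) (int j - (int n + int m + 1)) v))"
      unfolding b_def by (rule res_term_sum) (use T m in \<open>auto simp: J_def\<close>)
    also have "\<dots> = (\<Sum>j<J. sc (b j) (Dm m j) + (if j = n + m then sc (b j) U else 0))"
      by (rule sum.cong[OF refl]) (simp add: Dm_def scale_right_diff_distrib)
    also have "\<dots> = (\<Sum>j<J. sc (b j) (Dm m j)) + sc (b (n + m)) U"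
    proof -
      have "n + m \<in> {..<J}" using m by (simp add: J_def)
      then have "(\<Sum>j<J. if j = n + m then sc (b j) U else 0) = sc (b (n + m)) U"
        by (simp only: sum.delta[OF finite_lessThan] if_True)
      then show ?thesis by (simp only: sum.distrib)
    qed
    finally show ?thesis .
  qed
  have star: "star_n sc Y n A (Bp p) v =
     (\<Sum>m\<le>n. sc (c m) (\<Sum>j<J. sc (b j) (Dm m j))) + sc (\<Sum>m\<le>n. c m * b (n + m)) U"
  proof -
    have "star_n sc Y n A (Bp p) v = (\<Sum>m\<le>n. sc (c m) (res_term sc Y (A + int n) (int n + int m + 1) (Bp p) v))"
      unfolding star_n_def c_def ..
    also have "\<dots> = (\<Sum>m\<le>n. sc (c m) (\<Sum>j<J. sc (b j) (Dm m j)) + sc (c m * b (n + m)) U)"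
      by (rule sum.cong[OF refl]) (simp add: res scale_right_distrib)
    also have "\<dots> = (\<Sum>m\<le>n. sc (c m) (\<Sum>j<J. sc (b j) (Dm m j))) + sc (\<Sum>m\<le>n. c m * b (n + m)) U"
      by (simp add: sum.distrib scale_sum_left)
    finally show ?thesis .
  qed
  have CC: "(\<Sum>m\<le>n. c m * b (n + m)) =
     (of_int (int (i 1) * k + int n) gchoose n) * (\<Sum>m\<le>n. (-1)^m * (of_int (int (i 1) * k) gchoose m))"
    using coef_id[of n A] unfolding c_def b_def A_def p_def by (simp add: mult.assoc)
  have DW: "(\<Sum>m\<le>n. sc (c m) (\<Sum>j<J. sc (b j) (Dm m j))) \<in> W i"
    by (intro W_sum W_scale) (use D in \<open>auto simp: Dm_def\<close>)
  have "sc ((of_int (int (i 1) * k + int n) gchoose n) * (\<Sum>m\<le>n. (-1)^m * (of_int (int (i 1) * k) gchoose m))) U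
     - star_n sc Y n A (Bp p) v = - (\<Sum>m\<le>n. sc (c m) (\<Sum>j<J. sc (b j) (Dm m j)))"
    unfolding star CC[symmetric] by simp
  also have "\<dots> \<in> W i" using W_scale[OF DW, of "-1"] by simp
  finally show ?thesis unfolding U_def veq A_def p_def .
qed

end



lemma gchoose_int_zero: "((of_int x :: complex) gchoose n = 0) \<longleftrightarrow> (0 \<le> x \<and> x < int n)"
proof -
  have "((of_int x :: complex) gchoose n = 0) \<longleftrightarrow> (\<exists>i\<in>{0..<n}. (of_int x - of_nat i) / of_nat (n - i) = (0::complex))"
    by (simp only: gbinomial_altdef_of_nat prod_zero_iff[OF finite_atLeastLessThan])
  also have "\<dots> \<longleftrightarrow> (\<exists>i\<in>{0..<n}. (of_int x :: complex) = of_nat i)"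
    by (rule bex_cong[OF refl]) auto
  also have "\<dots> \<longleftrightarrow> (\<exists>i\<in>{0..<n}. x = int i)"
    by (rule bex_cong[OF refl]) (metis of_int_eq_iff of_int_of_nat_eq)
  also have "\<dots> \<longleftrightarrow> (0 \<le> x \<and> x < int n)"
    by (auto intro!: bexI[of _ "nat x"])
  finally show ?thesis .
qed

lemma coef_sum: "(\<Sum>m\<le>n. (-1)^m * ((of_int a :: complex) gchoose m)) = (-1)^n * (of_int (a - 1) gchoose n)"
proof -
  have "(\<Sum>m\<le>n. (-1)^m * ((of_int a :: complex) gchoose m)) = (\<Sum>m\<le>n. ((of_int a :: complex) gchoose m) * (-1)^m)"
    by (simp add: mult.commute)
  also have "\<dots> = (-1)^n * (of_int a - 1 gchoose n)" by (rule gbinomial_sum_lower_neg)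
  finally show ?thesis by simp
qed

lemma coef_zero:
  "((of_int (a + int n) gchoose n) * (\<Sum>m\<le>n. (-1)^m * (of_int a gchoose m)) = (0::complex))
   \<longleftrightarrow> (0 < \<bar>a\<bar> \<and> \<bar>a\<bar> \<le> int n)"
  unfolding coef_sum mult_eq_0_iff gchoose_int_zero by auto

lemma coef_big:
  "(of_int (a + int n) gchoose n) * (\<Sum>m\<le>n. (-1)^m * (of_int a gchoose m))
   = ((-1) ^ n * (of_int (a + int n) gchoose n) * (of_int (a - 1) gchoose n) :: complex)"
  unfolding coef_sum by (simp add: algebra_simps)

theorem proposition3p14:
  fixes sc :: "complex \<Rightarrow> 'v::ab_group_add \<Rightarrow> 'v"
    and Y :: "'v \<Rightarrow> int \<Rightarrow> 'v \<Rightarrow> 'v"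
    and vac \<omega> u :: 'v and c :: complex and n :: nat and k :: int and i :: "nat \<Rightarrow> nat"
  assumes VOA: "is_VOA sc Y vac \<omega> c"
    and n_pos: "n \<ge> 1"
    and wt_u: "u \<in> weight_space sc Y \<omega> k"
    and wt_bound: "k \<ge> - int n"
    and subalg: "vertex_subalgebra Y vac (Vu sc Y vac u)"
    and perm: "permutation_property sc Y vac u"
  shows
    "(\<exists>w'\<in>module.span sc
          {umon Y vac u i' (2 * n) | i'.
             (\<Sum>j\<in>{1..2*n}. i' j) < (\<Sum>j\<in>{1..2*n}. i j) \<or>
             ((\<Sum>j\<in>{1..2*n}. i' j) = (\<Sum>j\<in>{1..2*n}. i j) \<and> i' 1 < i 1)}.
        sc ((of_int (int (i 1) * k + int n) gchoose n) *
              (\<Sum>m\<le>n. (-1) ^ m * (of_int (int (i 1) * k) gchoose m)))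
            (umon Y vac u i (2 * n))
        - (star_n sc Y n (int (i 1) * k) ((Y u (-1) ^^ i 1) vac) (umon Y vac u (i(1 := 0)) (2 * n))
           + w')
        \<in> O_n sc Y \<omega> n)
   \<and> (((of_int (int (i 1) * k + int n) gchoose n) *
         (\<Sum>m\<le>n. (-1) ^ m * (of_int (int (i 1) * k) gchoose m)) = (0::complex))
        \<longleftrightarrow> (0 < \<bar>int (i 1) * k\<bar> \<and> \<bar>int (i 1) * k\<bar> \<le> int n))
   \<and> (int (i 1) * k > int n \<longrightarrow>
        (of_int (int (i 1) * k + int n) gchoose n) *
          (\<Sum>m\<le>n. (-1) ^ m * (of_int (int (i 1) * k) gchoose m))
        = ((-1) ^ n * (of_int (int (i 1) * k + int n) gchoose n) *
             (of_int (int (i 1) * k - 1) gchoose n) :: complex))"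
proof (intro conjI)
  interpret vsetup sc Y vac \<omega> u c n k
    by (rule vsetup.intro) (use VOA n_pos wt_u perm in auto)
  define X where "X = sc ((of_int (int (i 1) * k + int n) gchoose n) *
              (\<Sum>m\<le>n. (-1) ^ m * (of_int (int (i 1) * k) gchoose m)))
            (umon Y vac u i (2 * n))
        - star_n sc Y n (int (i 1) * k) ((Y u (-1) ^^ i 1) vac) (umon Y vac u (i(1 := 0)) (2 * n))"
  have "X \<in> W i" unfolding X_def by (rule main_W)
  then have "X \<in> {x + y | x y. x \<in> span On \<and> y \<in> span (Low i)}" unfolding W_def span_Un .
  then obtain oo w' where ow: "oo \<in> span On" "w' \<in> span (Low i)" "X = oo + w'"
    by blast
  have oO: "oo \<in> On" using ow(1) by (simp add: O_n_def span_span)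
  show "\<exists>w'\<in>module.span sc
          {umon Y vac u i' (2 * n) | i'.
             (\<Sum>j\<in>{1..2*n}. i' j) < (\<Sum>j\<in>{1..2*n}. i j) \<or>
             ((\<Sum>j\<in>{1..2*n}. i' j) = (\<Sum>j\<in>{1..2*n}. i j) \<and> i' 1 < i 1)}.
        sc ((of_int (int (i 1) * k + int n) gchoose n) *
              (\<Sum>m\<le>n. (-1) ^ m * (of_int (int (i 1) * k) gchoose m)))
            (umon Y vac u i (2 * n))
        - (star_n sc Y n (int (i 1) * k) ((Y u (-1) ^^ i 1) vac) (umon Y vac u (i(1 := 0)) (2 * n))
           + w')
        \<in> O_n sc Y \<omega> n"
  proof (rule bexI[of _ w'])
    show "w' \<in> module.span sc {umon Y vac u i' (2 * n) | i'.
             (\<Sum>j\<in>{1..2*n}. i' j) < (\<Sum>j\<in>{1..2*n}. i j) \<or>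
             ((\<Sum>j\<in>{1..2*n}. i' j) = (\<Sum>j\<in>{1..2*n}. i j) \<and> i' 1 < i 1)}"
      using ow(2) unfolding Low_def .
    have "sc ((of_int (int (i 1) * k + int n) gchoose n) *
              (\<Sum>m\<le>n. (-1) ^ m * (of_int (int (i 1) * k) gchoose m)))
            (umon Y vac u i (2 * n))
        - (star_n sc Y n (int (i 1) * k) ((Y u (-1) ^^ i 1) vac) (umon Y vac u (i(1 := 0)) (2 * n))
           + w') = X - w'" unfolding X_def by (simp add: algebra_simps)
    also have "\<dots> = oo" using ow(3) by simp
    finally show "sc ((of_int (int (i 1) * k + int n) gchoose n) *
              (\<Sum>m\<le>n. (-1) ^ m * (of_int (int (i 1) * k) gchoose m)))
            (umon Y vac u i (2 * n))
        - (star_n sc Y n (int (i 1) * k) ((Y u (-1) ^^ i 1) vac) (umon Y vac u (i(1 := 0)) (2 * n))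
           + w') \<in> O_n sc Y \<omega> n" using oO by simp
  qed
next
  show "((of_int (int (i 1) * k + int n) gchoose n) *
         (\<Sum>m\<le>n. (-1) ^ m * (of_int (int (i 1) * k) gchoose m)) = (0::complex))
        \<longleftrightarrow> (0 < \<bar>int (i 1) * k\<bar> \<and> \<bar>int (i 1) * k\<bar> \<le> int n)"
    by (rule coef_zero)
next
  show "int (i 1) * k > int n \<longrightarrow>
        (of_int (int (i 1) * k + int n) gchoose n) *
          (\<Sum>m\<le>n. (-1) ^ m * (of_int (int (i 1) * k) gchoose m))
        = ((-1) ^ n * (of_int (int (i 1) * k + int n) gchoose n) *
             (of_int (int (i 1) * k - 1) gchoose n) :: complex)"
    using coef_big by blast
qed


end
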